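(* Let $n\ge 2$ and let $P$ be a partition of $\{1,\dots,n+1\}$. There exists a convex $(n+1)$-dimensional polytope all of whose facets are regular simplices and whose boundary complex is isomorphic to ${\cal K}(P)$ if and only if $P$ has a single part (${\cal K}(P)$ is the boundary of the $(n+1)$-simplex), or all parts of $P$ are singletons (${\cal K}(P)$ is the boundary of the $(n+1)$-dimensional cross-polytope), or $P$ consists of one singleton and one part of size $n$ (${\cal K}(P)$ is the boundary of the bipyramid over an $n$-simplex).
   Context: For a partition $P=(P_1,\dots,P_t)$ of $\{1,\dots,n+1\}$, ${\cal K}(P)$ is the simplicial complex on the vertex set $\{1,\dots,n+1\}\cup\{p_1,\dots,p_t\}$ ($t$ new vertices) whose $n$-faces are the sets $\{y_1,\dots,y_{n+1}\}$ with, for each $i$, $y_i=i$ or $y_i=p_j$ where $i\in P_j$, subject to the $y_i$ being pairwise distinct; its faces are all nonempty subsets of these. The boundary complex of a simplicial polytope is the abstract simplicial complex whose faces are the vertex sets of its proper faces. *)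

theory Defs
  imports "HOL-Analysis.Analysis" "HOL-Library.Disjoint_Sets"
begin

text \<open>The complex K(P) for a partition P of {1..n+1}. Vertices: Inl i for i in {1..n+1},
  and Inr B for each block B of P (the new vertex p_j attached to block P_j = B).\<close>

definition KP_facets :: "nat \<Rightarrow> nat set set \<Rightarrow> (nat + nat set) set set" where
  "KP_facets n P = {F. \<exists>y. (\<forall>i\<in>{1..n+1}. y i = Inl i \<or> (\<exists>B\<in>P. i \<in> B \<and> y i = Inr B))
                          \<and> inj_on y {1..n+1} \<and> F = y ` {1..n+1}}"

definition KP :: "nat \<Rightarrow> nat set set \<Rightarrow> (nat + nat set) set set" where
  "KP n P = {S. S \<noteq> {} \<and> (\<exists>F\<in>KP_facets n P. S \<subseteq> F)}"

definition boundary_complex :: "'a::euclidean_space set \<Rightarrow> 'a set set" where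
  "boundary_complex Q = {{v. v extreme_point_of F} | F. F face_of Q \<and> F \<noteq> {} \<and> F \<noteq> Q}"

definition simplicial_iso :: "'a set set \<Rightarrow> 'b set set \<Rightarrow> bool" where
  "simplicial_iso K L \<longleftrightarrow> (\<exists>f. bij_betw f (\<Union>K) (\<Union>L) \<and> (\<forall>S. S \<subseteq> \<Union>K \<longrightarrow> (S \<in> K \<longleftrightarrow> f ` S \<in> L)))"

definition regular_simplex :: "'a::euclidean_space set \<Rightarrow> bool" where
  "regular_simplex S \<longleftrightarrow> (\<exists>V d. finite V \<and> \<not> affine_dependent V \<and> S = convex hull V
       \<and> (\<forall>x\<in>V. \<forall>y\<in>V. x \<noteq> y \<longrightarrow> dist x y = d))"

end

theory Submission
  imports Defs
begin


lemma dep_dist: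
  fixes T :: "'a::real_inner set"
  assumes "finite T" "sum c T = 0" "(\<Sum>y\<in>T. c y *\<^sub>R y) = 0" "x \<in> T"
  shows "(\<Sum>y\<in>T. c y * (dist x y)^2) = (\<Sum>y\<in>T. c y * (norm y)^2)"
proof -
  have e: "(dist x y)^2 = (norm x)^2 - 2 * (x \<bullet> y) + (norm y)^2" for y
    by (simp add: dist_norm power2_norm_eq_inner inner_diff_left inner_diff_right inner_commute)
  have "(\<Sum>y\<in>T. c y * (dist x y)^2) = (norm x)^2 * sum c T - 2 * (x \<bullet> (\<Sum>y\<in>T. c y *\<^sub>R y)) + (\<Sum>y\<in>T. c y * (norm y)^2)"
    by (simp add: e algebra_simps sum.distrib sum_subtractf sum_distrib_left sum_distrib_right inner_sum_right)
  then show ?thesis using assms by simp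
qed

lemma sum_helper1:
  fixes k :: real
  assumes "finite T" "x \<in> T" "\<And>y. y \<in> T \<Longrightarrow> y \<noteq> x \<Longrightarrow> f y = k * c y" "f x = 0"
  shows "sum f T = k * (sum c T - c x)"
proof -
  have "sum f T = f x + sum f (T - {x})" using assms by (simp add: sum.remove)
  also have "sum f (T - {x}) = sum (\<lambda>y. k * c y) (T - {x})" using assms by (intro sum.cong) auto
  also have "\<dots> = k * sum c (T - {x})" by (rule sum_distrib_left[symmetric])
  also have "sum c (T - {x}) = sum c T - c x" using assms by (simp add: sum_diff1)
  finally show ?thesis using assms by simp
qed

lemma sum_helper2:
  fixes k D :: real
  assumes "finite T" "x \<in> T" "z \<in> T" "x \<noteq> z" "\<And>y. y \<in> T \<Longrightarrow> y \<noteq> x \<Longrightarrow> y \<noteq> z \<Longrightarrow> f y = k * c y"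
     "f x = 0" "f z = D * c z"
  shows "sum f T = k * (sum c T - c x - c z) + D * c z"
proof -
  have "sum f T = f x + sum f (T - {x})" using assms by (simp add: sum.remove)
  also have "sum f (T - {x}) = f z + sum f (T - {x} - {z})" using assms by (intro sum.remove) auto
  also have "sum f (T - {x} - {z}) = sum (\<lambda>y. k * c y) (T - {x} - {z})" using assms by (intro sum.cong) auto
  also have "\<dots> = k * sum c (T - {x} - {z})" by (rule sum_distrib_left[symmetric])
  also have "sum c (T - {x} - {z}) = sum c T - c x - c z" using assms by (simp add: sum_diff1)
  finally show ?thesis using assms by simp
qed

lemma sum_const_on:
  assumes "\<And>y. y \<in> S \<Longrightarrow> c y = k"
  shows "sum c S = real (card S) * k"
  using assms by simp

lemma equidistant_indep:
  fixes T :: "'a::euclidean_space set"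
  assumes "finite T" "\<And>x y. x \<in> T \<Longrightarrow> y \<in> T \<Longrightarrow> x \<noteq> y \<Longrightarrow> dist x y = d"
  shows "\<not> affine_dependent T"
proof
  assume "affine_dependent T"
  then obtain c where c: "sum c T = 0" "\<exists>v\<in>T. c v \<noteq> 0" "(\<Sum>v\<in>T. c v *\<^sub>R v) = 0"
    using affine_dependent_explicit_finite[OF assms(1)] by blast
  define \<kappa> where "\<kappa> = (\<Sum>y\<in>T. c y * (norm y)^2)"
  have eq: "- (d^2) * c x = \<kappa>" if "x \<in> T" for x
  proof -
    have "(\<Sum>y\<in>T. c y * (dist x y)^2) = d^2 * (sum c T - c x)"
      by (rule sum_helper1) (use assms that in auto)
    then show ?thesis using dep_dist[OF assms(1) c(1) c(3) that] c(1) unfolding \<kappa>_def by simp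
  qed
  from c(2) obtain v where v: "v \<in> T" "c v \<noteq> 0" by blast
  show False
  proof (cases "d = 0")
    case True
    then have "T = {v}" using assms(2) v(1) by force
    then show False using c v by simp
  next
    case False
    then have "c x = - \<kappa> / d^2" if "x \<in> T" for x using eq[OF that] by (simp add: field_simps)
    then have "sum c T = real (card T) * (- \<kappa> / d^2)" by simp
    moreover have "card T > 0" using v assms(1) card_gt_0_iff by blast
    ultimately have "\<kappa> = 0" using c(1) False by simp
    then show False using eq[OF v(1)] v(2) False by simp
  qed
qed

lemma indep_card_le:
  fixes T :: "'a::euclidean_space set"
  assumes "\<not> affine_dependent T"
  shows "card T \<le> DIM('a) + 1"
  using independent_card_le_aff_dim[of T UNIV] assms by simp


lemma one_extra:
  fixes T :: "'a::euclidean_space set"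
  assumes T: "finite T" and ua: "ua \<in> T" and qa: "qa \<in> T" and ne: "ua \<noteq> qa" and d: "d > 0"
   and dd: "\<And>x y. x\<in>T \<Longrightarrow> y\<in>T \<Longrightarrow> x\<noteq>y \<Longrightarrow> {x,y} \<noteq> {ua,qa} \<Longrightarrow> dist x y = d"
   and dep: "affine_dependent T"
  shows "(dist ua qa)^2 * (real (card T) - 2) = 2 * d^2 * (real (card T) - 1)"
proof -
  obtain c where c: "sum c T = 0" "\<exists>v\<in>T. c v \<noteq> 0" "(\<Sum>v\<in>T. c v *\<^sub>R v) = 0"
    using affine_dependent_explicit_finite[OF T] dep by blast
  define \<kappa> where "\<kappa> = (\<Sum>y\<in>T. c y * (norm y)^2)"
  define D where "D = (dist ua qa)^2"
  define Oth where "Oth = T - {ua, qa}"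
  have eqOth: "c x = - \<kappa> / d^2" if "x \<in> Oth" for x
  proof -
    have "(\<Sum>y\<in>T. c y * (dist x y)^2) = d^2 * (sum c T - c x)"
      by (rule sum_helper1) (use T that dd in \<open>auto simp: Oth_def doubleton_eq_iff\<close>)
    then show ?thesis using dep_dist[OF T c(1) c(3), of x] c(1) that d unfolding \<kappa>_def Oth_def
      by (auto simp: field_simps)
  qed
  have eqa: "d^2 * (sum c T - c ua - c qa) + D * c qa = \<kappa>"
  proof -
    have "(\<Sum>y\<in>T. c y * (dist ua y)^2) = d^2 * (sum c T - c ua - c qa) + D * c qa"
      by (rule sum_helper2) (use T ua qa ne dd in \<open>auto simp: D_def doubleton_eq_iff\<close>)
    then show ?thesis using dep_dist[OF T c(1) c(3) ua] unfolding \<kappa>_def by simp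
  qed
  have eqb: "d^2 * (sum c T - c qa - c ua) + D * c ua = \<kappa>"
  proof -
    have "(\<Sum>y\<in>T. c y * (dist qa y)^2) = d^2 * (sum c T - c qa - c ua) + D * c ua"
      by (rule sum_helper2) (use T ua qa ne dd in \<open>auto simp: D_def doubleton_eq_iff dist_commute\<close>)
    then show ?thesis using dep_dist[OF T c(1) c(3) qa] unfolding \<kappa>_def by simp
  qed
  have Dpos: "D > 0" using ne by (simp add: D_def)
  have "d^2 * (sum c T - c ua - c qa) = d^2 * (sum c T - c qa - c ua)" by (simp add: algebra_simps)
  then have "D * c qa = D * c ua" using eqa eqb by linarith
  then have cab: "c qa = c ua" using Dpos by simp
  have cardOth: "card Oth = card T - 2" using T ua qa ne by (simp add: Oth_def card_Diff_subset)
  have cardT: "card T \<ge> 2"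
  proof -
    have "card {ua, qa} \<le> card T" using T ua qa by (intro card_mono) auto
    then show ?thesis using ne by simp
  qed
  have sT: "sum c T = sum c Oth + c ua + c qa"
  proof -
    have "sum c T = sum c Oth + sum c {ua, qa}" unfolding Oth_def
      using T ua qa by (metis add.commute empty_subsetI insert_subset sum.subset_diff)
    then show ?thesis using ne by simp
  qed
  have sOth: "sum c Oth = real (card Oth) * (- \<kappa> / d^2)" using eqOth by simp
  have k1: "\<kappa> = c ua * (D - 2 * d^2)" using eqa c(1) cab by (simp add: algebra_simps)
  have k2: "(real (card T) - 2) * (- \<kappa> / d^2) + 2 * c ua = 0"
    using sT sOth c(1) cab cardOth cardT by (simp add: of_nat_diff)
  have "c ua \<noteq> 0"
  proof
    assume z: "c ua = 0"
    then have "\<kappa> = 0" using k1 by simp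
    then have "c v = 0" if "v \<in> T" for v using eqOth[of v] z cab that by (cases "v \<in> Oth") (auto simp: Oth_def)
    then show False using c(2) by blast
  qed
  have "(real (card T) - 2) * \<kappa> = 2 * c ua * d^2" using k2 d by (simp add: field_simps)
  then have "c ua * ((real (card T) - 2) * (D - 2 * d^2)) = c ua * (2 * d^2)" using k1 by (simp add: algebra_simps)
  then have "(real (card T) - 2) * (D - 2 * d^2) = 2 * d^2" using \<open>c ua \<noteq> 0\<close> by simp
  then show ?thesis unfolding D_def[symmetric] by (simp add: algebra_simps)
qed

lemma two_extra:
  fixes T :: "'a::euclidean_space set"
  assumes T: "finite T" and ua: "ua \<in> T" and qa: "qa \<in> T" and ub: "ub \<in> T" and qb: "qb \<in> T"
   and ne: "distinct [ua, qa, ub, qb]" and d: "d > 0"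
   and dd: "\<And>x y. x\<in>T \<Longrightarrow> y\<in>T \<Longrightarrow> x\<noteq>y \<Longrightarrow> {x,y} \<noteq> {ua,qa} \<Longrightarrow> {x,y} \<noteq> {ub,qb} \<Longrightarrow> dist x y = d"
   and Da: "(dist ua qa)^2 * (real (card T) - 3) = 2 * d^2 * (real (card T) - 2)"
   and Db: "(dist ub qb)^2 * (real (card T) - 3) = 2 * d^2 * (real (card T) - 2)"
  shows "\<not> affine_dependent T"
proof
  assume dep: "affine_dependent T"
  obtain c where c: "sum c T = 0" "\<exists>v\<in>T. c v \<noteq> 0" "(\<Sum>v\<in>T. c v *\<^sub>R v) = 0"
    using affine_dependent_explicit_finite[OF T] dep by blast
  define \<kappa> where "\<kappa> = (\<Sum>y\<in>T. c y * (norm y)^2)"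
  define A where "A = (dist ua qa)^2"
  define B where "B = (dist ub qb)^2"
  define Oth where "Oth = T - {ua, qa, ub, qb}"
  have eqOth: "c x = - \<kappa> / d^2" if "x \<in> Oth" for x
  proof -
    have "(\<Sum>y\<in>T. c y * (dist x y)^2) = d^2 * (sum c T - c x)"
      by (rule sum_helper1) (use T that dd in \<open>auto simp: Oth_def doubleton_eq_iff\<close>)
    then show ?thesis using dep_dist[OF T c(1) c(3), of x] c(1) that d unfolding \<kappa>_def Oth_def
      by (auto simp: field_simps)
  qed
  have eqa: "d^2 * (sum c T - c ua - c qa) + A * c qa = \<kappa>"
  proof -
    have "(\<Sum>y\<in>T. c y * (dist ua y)^2) = d^2 * (sum c T - c ua - c qa) + A * c qa"
      by (rule sum_helper2) (use T ua qa ne dd in \<open>auto simp: A_def doubleton_eq_iff\<close>)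
    then show ?thesis using dep_dist[OF T c(1) c(3) ua] unfolding \<kappa>_def by simp
  qed
  have eqa': "d^2 * (sum c T - c qa - c ua) + A * c ua = \<kappa>"
  proof -
    have "(\<Sum>y\<in>T. c y * (dist qa y)^2) = d^2 * (sum c T - c qa - c ua) + A * c ua"
      by (rule sum_helper2) (use T ua qa ne dd in \<open>auto simp: A_def doubleton_eq_iff dist_commute\<close>)
    then show ?thesis using dep_dist[OF T c(1) c(3) qa] unfolding \<kappa>_def by simp
  qed
  have eqb: "d^2 * (sum c T - c ub - c qb) + B * c qb = \<kappa>"
  proof -
    have "(\<Sum>y\<in>T. c y * (dist ub y)^2) = d^2 * (sum c T - c ub - c qb) + B * c qb"
      by (rule sum_helper2) (use T ub qb ne dd in \<open>auto simp: B_def doubleton_eq_iff\<close>)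
    then show ?thesis using dep_dist[OF T c(1) c(3) ub] unfolding \<kappa>_def by simp
  qed
  have eqb': "d^2 * (sum c T - c qb - c ub) + B * c ub = \<kappa>"
  proof -
    have "(\<Sum>y\<in>T. c y * (dist qb y)^2) = d^2 * (sum c T - c qb - c ub) + B * c ub"
      by (rule sum_helper2) (use T ub qb ne dd in \<open>auto simp: B_def doubleton_eq_iff dist_commute\<close>)
    then show ?thesis using dep_dist[OF T c(1) c(3) qb] unfolding \<kappa>_def by simp
  qed
  have Apos: "A > 0" using ne by (simp add: A_def)
  have Bpos: "B > 0" using ne by (simp add: B_def)
  have "d^2 * (sum c T - c ua - c qa) = d^2 * (sum c T - c qa - c ua)" by (simp add: algebra_simps)
  then have "A * c qa = A * c ua" using eqa eqa' by linarith
  then have cab: "c qa = c ua" using Apos by simp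
  have "d^2 * (sum c T - c ub - c qb) = d^2 * (sum c T - c qb - c ub)" by (simp add: algebra_simps)
  then have "B * c qb = B * c ub" using eqb eqb' by linarith
  then have cab2: "c qb = c ub" using Bpos by simp
  have sub: "{ua, qa, ub, qb} \<subseteq> T" using ua qa ub qb by auto
  have c4: "card {ua, qa, ub, qb} = 4" using ne by simp
  have cardOth: "card Oth = card T - 4" using T sub c4 by (simp add: Oth_def card_Diff_subset)
  have cardT: "card T \<ge> 4" using card_mono[OF T sub] c4 by simp
  have sT: "sum c T = sum c Oth + c ua + c qa + c ub + c qb"
  proof -
    have "sum c T = sum c Oth + sum c {ua, qa, ub, qb}" unfolding Oth_def
      using T sub by (metis add.commute sum.subset_diff)
    then show ?thesis using ne by (simp add: algebra_simps)
  qed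
  have sOth: "sum c Oth = real (card Oth) * (- \<kappa> / d^2)" using eqOth by simp
  have k1: "\<kappa> = c ua * (A - 2 * d^2)" using eqa c(1) cab by (simp add: algebra_simps)
  have k2: "\<kappa> = c ub * (B - 2 * d^2)" using eqb c(1) cab2 by (simp add: algebra_simps)
  have k3: "(real (card T) - 4) * (- \<kappa> / d^2) + 2 * c ua + 2 * c ub = 0"
    using sT sOth c(1) cab cab2 cardOth cardT by (simp add: of_nat_diff)
  define m where "m = real (card T)"
  have m4: "m \<ge> 4" using cardT unfolding m_def by simp
  have A': "(A - 2 * d^2) * (m - 3) = 2 * d^2" using Da unfolding A_def[symmetric] m_def[symmetric]
    by (simp add: algebra_simps)
  have B': "(B - 2 * d^2) * (m - 3) = 2 * d^2" using Db unfolding B_def[symmetric] m_def[symmetric]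
    by (simp add: algebra_simps)
  have ka: "\<kappa> * (m - 3) = c ua * (2 * d^2)" using k1 A' by (metis mult.assoc)
  have kb: "\<kappa> * (m - 3) = c ub * (2 * d^2)" using k2 B' by (metis mult.assoc)
  have "c ua = c ub" using ka kb d by simp
  have k3': "(m - 4) * \<kappa> = (2 * c ua + 2 * c ub) * d^2" using k3 d unfolding m_def[symmetric]
    by (simp add: field_simps)
  have "(m - 4) * (\<kappa> * (m - 3)) = (4 * c ua * d^2) * (m - 3)"
    using k3' \<open>c ua = c ub\<close> by (simp add: algebra_simps)
  then have "(m - 4) * (c ua * (2 * d^2)) = (4 * c ua * d^2) * (m - 3)" using ka by simp
  then have "c ua * (2 * d^2) * (m - 2) = 0" by (simp add: algebra_simps)
  then have z: "c ua = 0" using d m4 by simp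
  then have "\<kappa> = 0" using k1 by simp
  then have "c v = 0" if "v \<in> T" for v using eqOth[of v] z cab cab2 \<open>c ua = c ub\<close> that
    by (cases "v \<in> Oth") (auto simp: Oth_def)
  then show False using c(2) by blast
qed


lemma ext_nonempty:
  fixes F :: "'a::euclidean_space set"
  assumes "compact F" "convex F" "F \<noteq> {}"
  shows "{v. v extreme_point_of F} \<noteq> {}"
  using Krein_Milman_Minkowski[OF assms(1,2)] assms(3) by auto

lemma bc_char:
  fixes V :: "'a::euclidean_space set"
  assumes V: "finite V" and ext: "{v. v extreme_point_of convex hull V} = V"
  shows "W \<in> boundary_complex (convex hull V) \<longleftrightarrow>
     W \<subseteq> V \<and> W \<noteq> {} \<and> W \<noteq> V \<and> (\<exists>a b. (\<forall>v\<in>V. a \<bullet> v \<le> b) \<and> W = {v\<in>V. a \<bullet> v = b})"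
proof
  let ?Q = "convex hull V"
  have polyQ: "polytope ?Q" using V by (auto simp: polytope_def)
  have VQ: "V \<subseteq> ?Q" by (rule hull_subset)
  assume "W \<in> boundary_complex ?Q"
  then obtain F where W: "W = {v. v extreme_point_of F}" and F: "F face_of ?Q" "F \<noteq> {}" "F \<noteq> ?Q"
    unfolding boundary_complex_def by blast
  have "F exposed_face_of ?Q" using F(1) exposed_face_of_polyhedron polyQ polytope_imp_polyhedron by blast
  then obtain a b where ab: "?Q \<subseteq> {x. a \<bullet> x \<le> b}" "F = ?Q \<inter> {x. a \<bullet> x = b}"
    unfolding exposed_face_of_def by blast
  have WV: "W = {v\<in>V. a \<bullet> v = b}"
    using W ab(2) ext extreme_point_of_face[OF F(1)] VQ by auto
  have cQ: "compact ?Q" using V by (simp add: compact_convex_hull finite_imp_compact)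
  have cF: "compact F" by (rule face_of_imp_compact[OF convex_convex_hull cQ F(1)])
  have "W \<noteq> {}" unfolding W
    by (rule ext_nonempty[OF cF face_of_imp_convex[OF F(1)] F(2)])
  moreover have "W \<noteq> V"
  proof
    assume "W = V"
    then have "V \<subseteq> F" using WV ab(2) VQ by auto
    then have "?Q \<subseteq> F" using face_of_imp_convex[OF F(1)] by (simp add: hull_minimal)
    then show False using F(3) face_of_imp_subset[OF F(1)] by auto
  qed
  moreover have "\<forall>v\<in>V. a \<bullet> v \<le> b" using ab(1) VQ by auto
  ultimately show "W \<subseteq> V \<and> W \<noteq> {} \<and> W \<noteq> V \<and> (\<exists>a b. (\<forall>v\<in>V. a \<bullet> v \<le> b) \<and> W = {v\<in>V. a \<bullet> v = b})"
    using WV by (intro conjI exI[of _ a] exI[of _ b]) auto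
next
  let ?Q = "convex hull V"
  have VQ: "V \<subseteq> ?Q" by (rule hull_subset)
  assume "W \<subseteq> V \<and> W \<noteq> {} \<and> W \<noteq> V \<and> (\<exists>a b. (\<forall>v\<in>V. a \<bullet> v \<le> b) \<and> W = {v\<in>V. a \<bullet> v = b})"
  then obtain a b where W: "W \<subseteq> V" "W \<noteq> {}" "W \<noteq> V" "\<forall>v\<in>V. a \<bullet> v \<le> b" "W = {v\<in>V. a \<bullet> v = b}"
    by blast
  have Qle: "?Q \<subseteq> {x. a \<bullet> x \<le> b}" using W(4) by (intro hull_minimal) (auto simp: convex_halfspace_le)
  define F where "F = ?Q \<inter> {x. a \<bullet> x = b}"
  have F: "F face_of ?Q" unfolding F_def
    by (rule face_of_Int_supporting_hyperplane_le) (use Qle in auto)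
  have "{v. v extreme_point_of F} = W"
    using extreme_point_of_face[OF F] ext VQ W(5) by (auto simp: F_def)
  moreover have "F \<noteq> {}" using W(2) W(5) VQ by (auto simp: F_def)
  moreover have "F \<noteq> ?Q" using W(3) W(5) VQ W(1) by (auto simp: F_def)
  ultimately show "W \<in> boundary_complex ?Q" unfolding boundary_complex_def using F
    by (intro CollectI exI[of _ F]) auto
qed

lemma ext_from_exposed:
  fixes V :: "'a::euclidean_space set"
  assumes V: "finite V" and ex: "\<And>v. v \<in> V \<Longrightarrow> \<exists>a b. (\<forall>w\<in>V. a \<bullet> w \<le> b) \<and> {w\<in>V. a \<bullet> w = b} = {v}"
  shows "{v. v extreme_point_of convex hull V} = V"
proof
  show "{v. v extreme_point_of convex hull V} \<subseteq> V" using extreme_point_of_convex_hull by auto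
  let ?Q = "convex hull V"
  have VQ: "V \<subseteq> ?Q" by (rule hull_subset)
  have cQ: "compact ?Q" using V by (simp add: compact_convex_hull finite_imp_compact)
  show "V \<subseteq> {v. v extreme_point_of convex hull V}"
  proof
    fix v assume v: "v \<in> V"
    obtain a b where ab: "\<forall>w\<in>V. a \<bullet> w \<le> b" "{w\<in>V. a \<bullet> w = b} = {v}" using ex[OF v] by blast
    have Qle: "?Q \<subseteq> {x. a \<bullet> x \<le> b}" using ab(1) by (intro hull_minimal) (auto simp: convex_halfspace_le)
    define F where "F = ?Q \<inter> {x. a \<bullet> x = b}"
    have F: "F face_of ?Q" unfolding F_def
      by (rule face_of_Int_supporting_hyperplane_le) (use Qle in auto)
    have "v \<in> F" using ab(2) VQ by (auto simp: F_def)
    have "{u. u extreme_point_of F} \<noteq> {}"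
      by (rule ext_nonempty[OF face_of_imp_compact[OF convex_convex_hull cQ F] face_of_imp_convex[OF F]]) (use \<open>v \<in> F\<close> in auto)
    then obtain u where u: "u extreme_point_of F" by blast
    then have "u extreme_point_of ?Q" "u \<in> F" using extreme_point_of_face[OF F] by auto
    then have "u \<in> V" using extreme_point_of_convex_hull by blast
    then have "u = v" using \<open>u \<in> F\<close> ab(2) by (auto simp: F_def)
    then show "v \<in> {v. v extreme_point_of convex hull V}"
      using \<open>u extreme_point_of ?Q\<close> by simp
  qed
qed

lemma face_conv_ext:
  fixes V :: "'a::euclidean_space set"
  assumes V: "finite V" and F: "F face_of convex hull V" "F \<noteq> {}" "F \<noteq> convex hull V"
  shows "{v. v extreme_point_of F} \<in> boundary_complex (convex hull V)"
        "F = convex hull {v. v extreme_point_of F}"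
proof -
  show "{v. v extreme_point_of F} \<in> boundary_complex (convex hull V)"
    unfolding boundary_complex_def using F by (intro CollectI exI[of _ F]) auto
  have cQ: "compact (convex hull V)" using V by (simp add: compact_convex_hull finite_imp_compact)
  show "F = convex hull {v. v extreme_point_of F}"
    by (rule Krein_Milman_Minkowski[OF face_of_imp_compact[OF convex_convex_hull cQ F(1)] face_of_imp_convex[OF F(1)]])
qed

lemma regular_simplex_hull:
  fixes W :: "'a::euclidean_space set"
  assumes "finite W" "\<And>x y. x \<in> W \<Longrightarrow> y \<in> W \<Longrightarrow> x \<noteq> y \<Longrightarrow> dist x y = d"
  shows "regular_simplex (convex hull W)"
  unfolding regular_simplex_def
  by (intro exI[of _ W] exI[of _ d] conjI) (use equidistant_indep[OF assms] assms in auto)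

lemma iso_from_inv:
  assumes "bij_betw \<psi> (\<Union>L) (\<Union>K)" "\<And>T. T \<subseteq> \<Union>L \<Longrightarrow> (T \<in> L \<longleftrightarrow> \<psi> ` T \<in> K)"
  shows "simplicial_iso K L"
proof -
  define f where "f = inv_into (\<Union>L) \<psi>"
  have bf: "bij_betw f (\<Union>K) (\<Union>L)" unfolding f_def by (rule bij_betw_inv_into[OF assms(1)])
  have "S \<in> K \<longleftrightarrow> f ` S \<in> L" if S: "S \<subseteq> \<Union>K" for S
  proof -
    have sub: "f ` S \<subseteq> \<Union>L" using bf S bij_betw_imp_surj_on by blast
    have fx: "\<psi> (f x) = x" if "x \<in> S" for x
      using S that assms(1) unfolding f_def bij_betw_def by (metis f_inv_into_f subsetD)
    have "\<psi> ` (f ` S) = (\<lambda>x. x) ` S" unfolding image_image by (rule image_cong) (auto simp: fx)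
    then have "\<psi> ` (f ` S) = S" by simp
    then show ?thesis using assms(2)[OF sub] by simp
  qed
  then show ?thesis unfolding simplicial_iso_def using bf by (intro exI[of _ f]) auto
qed


definition Lab :: "nat \<Rightarrow> nat set set \<Rightarrow> (nat + nat set) set" where
  "Lab n P = Inl ` {1..n+1} \<union> Inr ` P"

lemma part_uniq:
  assumes "partition_on A P" "B \<in> P" "C \<in> P" "i \<in> B" "i \<in> C"
  shows "B = C"
  using assms partition_onD2[OF assms(1)] unfolding disjoint_def by blast

lemma KP_char:
  assumes P: "partition_on {1..n+1} P"
  shows "T \<in> KP n P \<longleftrightarrow> T \<noteq> {} \<and> T \<subseteq> Lab n P \<and> (\<forall>B\<in>P. \<not> (Inr B \<in> T \<and> Inl ` B \<subseteq> T))"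
proof
  assume "T \<in> KP n P"
  then obtain F where TF: "T \<noteq> {}" "F \<in> KP_facets n P" "T \<subseteq> F" unfolding KP_def by auto
  from TF(2) obtain y where y: "\<forall>i\<in>{1..n+1}. y i = Inl i \<or> (\<exists>B\<in>P. i \<in> B \<and> y i = Inr B)" "inj_on y {1..n+1}"
      "F = y ` {1..n+1}"
    unfolding KP_facets_def by auto
  have T: "T \<noteq> {}" "T \<subseteq> y ` {1..n+1}" using TF y(3) by auto
  have "T \<subseteq> Lab n P"
  proof
    fix x assume "x \<in> T"
    then obtain i where i: "i \<in> {1..n+1}" "x = y i" using T(2) by blast
    have "y i = Inl i \<or> (\<exists>B\<in>P. i \<in> B \<and> y i = Inr B)" using y(1) i(1) by simp
    then show "x \<in> Lab n P" unfolding Lab_def using i by auto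
  qed
  moreover have "\<not> (Inr B \<in> T \<and> Inl ` B \<subseteq> T)" if B: "B \<in> P" for B
  proof
    assume a: "Inr B \<in> T \<and> Inl ` B \<subseteq> T"
    have "Inr B \<in> y ` {1..n+1}" using a T(2) by auto
    then obtain j where j: "j \<in> {1..n+1}" "y j = Inr B" by auto
    have "y j = Inl j \<or> (\<exists>B\<in>P. j \<in> B \<and> y j = Inr B)" using y(1) j(1) by simp
    then have "j \<in> B" using j(2) by auto
    then have "Inl j \<in> T" using a by auto
    then have "Inl j \<in> y ` {1..n+1}" using T(2) by auto
    then obtain j' where j': "j' \<in> {1..n+1}" "y j' = Inl j" by auto
    have "y j' = Inl j' \<or> (\<exists>B\<in>P. j' \<in> B \<and> y j' = Inr B)" using y(1) j'(1) by simp
    then have "y j' = Inl j'" using j'(2) by auto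
    then have "j' = j" using j' by simp
    then show False using j j' by simp
  qed
  ultimately show "T \<noteq> {} \<and> T \<subseteq> Lab n P \<and> (\<forall>B\<in>P. \<not> (Inr B \<in> T \<and> Inl ` B \<subseteq> T))"
    using T by blast
next
  assume a: "T \<noteq> {} \<and> T \<subseteq> Lab n P \<and> (\<forall>B\<in>P. \<not> (Inr B \<in> T \<and> Inl ` B \<subseteq> T))"
  define k where "k B = (SOME k. k \<in> B \<and> Inl k \<notin> T)" for B
  have k: "k B \<in> B \<and> Inl (k B) \<notin> T" if "B \<in> P" "Inr B \<in> T" for B
    unfolding k_def
  proof (rule someI_ex)
    have "\<not> Inl ` B \<subseteq> T" using a that by auto
    then show "\<exists>k. k \<in> B \<and> Inl k \<notin> T" by auto
  qed
  have U: "\<Union>P = {1..n+1}" using partition_onD1[OF P] by simp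
  define blk where "blk i = (THE B. B \<in> P \<and> i \<in> B)" for i
  have blk: "blk i \<in> P \<and> i \<in> blk i" if "i \<in> {1..n+1}" for i
  proof -
    have "i \<in> \<Union>P" using that U by simp
    then obtain B where B: "B \<in> P" "i \<in> B" by auto
    have ex: "\<exists>!B. B \<in> P \<and> i \<in> B"
    proof (rule ex1I[of _ B])
      show "B \<in> P \<and> i \<in> B" using B by simp
      fix C assume "C \<in> P \<and> i \<in> C"
      then show "C = B" using part_uniq[OF P, of C B i] B by simp
    qed
    show ?thesis unfolding blk_def by (rule theI'[OF ex])
  qed
  define y where "y i = (if Inr (blk i) \<in> T \<and> k (blk i) = i then Inr (blk i) else Inl i)" for i
  have y1: "\<forall>i\<in>{1..n+1}. y i = Inl i \<or> (\<exists>B\<in>P. i \<in> B \<and> y i = Inr B)"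
    using blk unfolding y_def by auto
  have yl: "m = i" if "y i = Inl m" for i m
    using that unfolding y_def by (cases "Inr (blk i) \<in> T \<and> k (blk i) = i") simp_all
  have yr: "k (blk i) = i \<and> C = blk i" if "y i = Inr C" for i C
    using that unfolding y_def by (cases "Inr (blk i) \<in> T \<and> k (blk i) = i") simp_all
  have y2: "inj_on y {1..n+1}"
  proof (rule inj_onI)
    fix i j assume e: "y i = y j"
    show "i = j"
    proof (cases "y i")
      case (Inl m)
      then show ?thesis using yl[of i m] yl[of j m] e by simp
    next
      case (Inr C)
      then show ?thesis using yr[of i C] yr[of j C] e by simp
    qed
  qed
  have y3: "T \<subseteq> y ` {1..n+1}"
  proof
    fix x assume x: "x \<in> T"
    then have "x \<in> Lab n P" using a by blast
    then consider (l) i where "i \<in> {1..n+1}" "x = Inl i" | (r) B where "B \<in> P" "x = Inr B"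
      unfolding Lab_def by blast
    then show "x \<in> y ` {1..n+1}"
    proof cases
      case l
      have "y i = Inl i"
      proof (rule ccontr)
        assume "y i \<noteq> Inl i"
        then have "Inr (blk i) \<in> T" "k (blk i) = i" unfolding y_def by (auto split: if_splits)
        then show False using k[of "blk i"] blk[OF l(1)] x l(2) by auto
      qed
      then show ?thesis using l by force
    next
      case r
      have kB: "k B \<in> B" using k[OF r(1)] x r(2) by blast
      have i: "k B \<in> {1..n+1}" using kB r(1) U by blast
      have "blk (k B) = B" using blk[OF i] kB r(1) part_uniq[OF P, of "blk (k B)" B "k B"] by simp
      then have "y (k B) = Inr B" unfolding y_def using x r(2) by simp
      then show ?thesis using r(2) i by force
    qed
  qed
  have "y ` {1..n+1} \<in> KP_facets n P" unfolding KP_facets_def using y1 y2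
    by (intro CollectI exI[of _ y]) auto
  then show "T \<in> KP n P" unfolding KP_def using a y3 by auto
qed

lemma KP_single:
  assumes P: "partition_on {1..n+1} P" and x: "x \<in> Lab n P"
  shows "{x} \<in> KP n P"
proof -
  have "\<not> (Inr B \<in> {x} \<and> Inl ` B \<subseteq> {x})" if "B \<in> P" for B
  proof
    assume "Inr B \<in> {x} \<and> Inl ` B \<subseteq> {x}"
    moreover have "B \<noteq> {}" using partition_onD3[OF P] that by auto
    ultimately show False by auto
  qed
  then show ?thesis using KP_char[OF P] x by auto
qed

lemma iso_generic:
  assumes bij: "bij_betw \<psi> Lb V" and KU: "\<And>T. T \<in> KK \<Longrightarrow> T \<subseteq> Lb"
    and Ksing: "\<And>x. x \<in> Lb \<Longrightarrow> {x} \<in> KK"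
    and BV: "\<And>W. W \<in> BB \<Longrightarrow> W \<subseteq> V"
    and eq: "\<And>T. T \<subseteq> Lb \<Longrightarrow> (T \<in> KK \<longleftrightarrow> \<psi> ` T \<in> BB)"
  shows "simplicial_iso BB KK"
proof -
  have UK: "\<Union>KK = Lb" using KU Ksing by blast
  have UB: "\<Union>BB = V"
  proof
    show "\<Union>BB \<subseteq> V" using BV by blast
    show "V \<subseteq> \<Union>BB"
    proof
      fix v assume "v \<in> V"
      then obtain x where x: "x \<in> Lb" "v = \<psi> x" using bij by (auto simp: bij_betw_def)
      then have "\<psi> ` {x} \<in> BB" using eq[of "{x}"] Ksing[OF x(1)] by simp
      then show "v \<in> \<Union>BB" using x by auto
    qed
  qed
  show ?thesis by (rule iso_from_inv) (use bij eq UK UB in auto)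
qed


lemma basis_inner: "e \<in> Basis \<Longrightarrow> e' \<in> Basis \<Longrightarrow> e \<bullet> e' = (if e = e' then 1 else 0)"
  by (simp add: inner_Basis)

lemma basis_neg:
  fixes e :: "'a::euclidean_space"
  assumes "e \<in> Basis" "e' \<in> Basis" shows "e \<noteq> - e'"
proof
  assume "e = - e'"
  then have "e \<bullet> e' = - 1" using assms by (simp add: inner_Basis)
  then show False using basis_inner[OF assms] by (simp split: if_splits)
qed

lemma cross_exposed:
  fixes W :: "'a::euclidean_space set"
  assumes WV: "W \<subseteq> Basis \<union> uminus ` Basis"
  shows "(W \<noteq> {} \<and> W \<noteq> Basis \<union> uminus ` Basis \<and> (\<exists>a b. (\<forall>v\<in>Basis \<union> uminus ` Basis. a \<bullet> v \<le> b) \<and> W = {v\<in>Basis \<union> uminus ` Basis. a \<bullet> v = b}))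
     \<longleftrightarrow> (W \<noteq> {} \<and> (\<forall>e\<in>Basis. \<not> (e \<in> W \<and> - e \<in> W)))"
proof -
  let ?V = "Basis \<union> uminus ` Basis :: 'a set"
  have negV: "- v \<in> ?V" if "v \<in> ?V" for v using that by auto
  show ?thesis
  proof
    assume "W \<noteq> {} \<and> W \<noteq> ?V \<and> (\<exists>a b. (\<forall>v\<in>?V. a \<bullet> v \<le> b) \<and> W = {v\<in>?V. a \<bullet> v = b})"
    then obtain a b where W: "W \<noteq> {}" "W \<noteq> ?V" "\<forall>v\<in>?V. a \<bullet> v \<le> b" "W = {v\<in>?V. a \<bullet> v = b}" by blast
    have "\<not> (e \<in> W \<and> - e \<in> W)" if e: "e \<in> Basis" for e
    proof
      assume "e \<in> W \<and> - e \<in> W"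
      then have "a \<bullet> e = b" "a \<bullet> (- e) = b" using W(4) by auto
      then have b0: "b = 0" by simp
      have "v \<in> W" if v: "v \<in> ?V" for v
      proof -
        have "a \<bullet> v \<le> 0" using bspec[OF W(3) v] b0 by simp
        moreover have "a \<bullet> (- v) \<le> 0" using bspec[OF W(3) negV[OF v]] b0 by simp
        ultimately have "a \<bullet> v = 0" by simp
        then show ?thesis using W(4) v b0 by auto
      qed
      then have "W = ?V" using WV by blast
      then show False using W(2) by simp
    qed
    then show "W \<noteq> {} \<and> (\<forall>e\<in>Basis. \<not> (e \<in> W \<and> - e \<in> W))" using W(1) by blast
  next
    assume R: "W \<noteq> {} \<and> (\<forall>e\<in>Basis. \<not> (e \<in> W \<and> - e \<in> W))"
    define \<sigma> where "\<sigma> e = (if e \<in> W then 1 else if - e \<in> W then - 1 else (0::real))" for e :: 'a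
    define a where "a = (\<Sum>e\<in>Basis. \<sigma> e *\<^sub>R e)"
    have ae: "a \<bullet> e' = \<sigma> e'" if "e' \<in> Basis" for e'
    proof -
      have "a \<bullet> e' = (\<Sum>e\<in>Basis. \<sigma> e * (e \<bullet> e'))" unfolding a_def by (simp add: inner_sum_left)
      also have "\<dots> = (\<Sum>e\<in>Basis. if e = e' then \<sigma> e else 0)"
        by (rule sum.cong) (use that in \<open>auto simp: inner_Basis\<close>)
      also have "\<dots> = \<sigma> e'" using that by simp
      finally show ?thesis .
    qed
    have le: "\<forall>v\<in>?V. a \<bullet> v \<le> 1"
    proof
      fix v assume "v \<in> ?V"
      then consider e where "e \<in> Basis" "v = e" | e where "e \<in> Basis" "v = - e" by blast
      then show "a \<bullet> v \<le> 1" by cases (auto simp: ae \<sigma>_def)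
    qed
    have eqW: "W = {v\<in>?V. a \<bullet> v = 1}"
    proof
      show "W \<subseteq> {v\<in>?V. a \<bullet> v = 1}"
      proof
        fix v assume v: "v \<in> W"
        then have "v \<in> ?V" using WV by blast
        then consider e where "e \<in> Basis" "v = e" | e where "e \<in> Basis" "v = - e" by blast
        then show "v \<in> {v\<in>?V. a \<bullet> v = 1}"
        proof cases
          case 1 then show ?thesis using v by (auto simp: ae \<sigma>_def)
        next
          case 2 then have "e \<notin> W" using R v by blast
          then show ?thesis using v 2 by (auto simp: ae \<sigma>_def)
        qed
      qed
      show "{v\<in>?V. a \<bullet> v = 1} \<subseteq> W"
      proof
        fix v assume v: "v \<in> {v\<in>?V. a \<bullet> v = 1}"
        then consider e where "e \<in> Basis" "v = e" | e where "e \<in> Basis" "v = - e" by blast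
        then show "v \<in> W"
        proof cases
          case 1 then show ?thesis using v by (auto simp: ae \<sigma>_def split: if_splits)
        next
          case 2 then show ?thesis using v by (auto simp: ae \<sigma>_def split: if_splits)
        qed
      qed
    qed
    have "W \<noteq> ?V"
    proof
      assume "W = ?V"
      obtain e :: 'a where "e \<in> Basis" using nonempty_Basis by blast
      then show False using R \<open>W = ?V\<close> by blast
    qed
    then show "W \<noteq> {} \<and> W \<noteq> ?V \<and> (\<exists>a b. (\<forall>v\<in>?V. a \<bullet> v \<le> b) \<and> W = {v\<in>?V. a \<bullet> v = b})"
      using R le eqW by blast
  qed
qed

lemma cross_dist:
  fixes x y :: "'a::euclidean_space"
  assumes "x \<in> Basis \<union> uminus ` Basis" "y \<in> Basis \<union> uminus ` Basis" "x \<noteq> y" "y \<noteq> - x"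
  shows "dist x y = sqrt 2"
proof -
  obtain e s where e: "e \<in> Basis" "x = s *\<^sub>R e" "s = 1 \<or> s = -1" using assms(1) by force
  obtain e' s' where e': "e' \<in> Basis" "y = s' *\<^sub>R e'" "s' = 1 \<or> s' = -1" using assms(2) by force
  have "e \<noteq> e'" using e e' assms(3,4) by auto
  then have "e \<bullet> e' = 0" using e(1) e'(1) by (simp add: inner_Basis)
  then have "(dist x y)^2 = 2" using e e'
    by (auto simp: dist_norm power2_norm_eq_inner inner_diff_left inner_diff_right inner_commute)
  then show ?thesis by (metis zero_le_dist real_sqrt_unique)
qed


lemma realize_generic:
  fixes V :: "'a::euclidean_space set" and R :: "'a set \<Rightarrow> bool"
  assumes V: "finite V"
   and char: "\<And>W. W \<subseteq> V \<Longrightarrow> (W \<noteq> {} \<and> W \<noteq> V \<and> (\<exists>a b. (\<forall>v\<in>V. a \<bullet> v \<le> b) \<and> W = {v\<in>V. a \<bullet> v = b})) \<longleftrightarrow> R W"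
   and Rsing: "\<And>v. v \<in> V \<Longrightarrow> R {v}"
   and Rdist: "\<And>W x y. W \<subseteq> V \<Longrightarrow> R W \<Longrightarrow> x \<in> W \<Longrightarrow> y \<in> W \<Longrightarrow> x \<noteq> y \<Longrightarrow> dist x y = d"
   and dim: "aff_dim (convex hull V) = int (n+1)"
   and bij: "bij_betw \<psi> (Lab n P) V"
   and P: "partition_on {1..n+1} P"
   and corr: "\<And>T. T \<subseteq> Lab n P \<Longrightarrow> (T \<in> KP n P \<longleftrightarrow> R (\<psi> ` T))"
  shows "\<exists>Q::'a set. polytope Q \<and> aff_dim Q = int (n + 1)
            \<and> (\<forall>F. F facet_of Q \<longrightarrow> regular_simplex F)
            \<and> simplicial_iso (boundary_complex Q) (KP n P)"
proof -
  let ?Q = "convex hull V"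
  have ext: "{v. v extreme_point_of ?Q} = V"
  proof (rule ext_from_exposed[OF V])
    fix v assume v: "v \<in> V"
    have "{v} \<noteq> {} \<and> {v} \<noteq> V \<and> (\<exists>a b. (\<forall>w\<in>V. a \<bullet> w \<le> b) \<and> {v} = {w\<in>V. a \<bullet> w = b})"
      using char[of "{v}"] Rsing[OF v] v by simp
    then show "\<exists>a b. (\<forall>w\<in>V. a \<bullet> w \<le> b) \<and> {w\<in>V. a \<bullet> w = b} = {v}" by metis
  qed
  have bc: "W \<in> boundary_complex ?Q \<longleftrightarrow> W \<subseteq> V \<and> R W" for W
  proof (cases "W \<subseteq> V")
    case True then show ?thesis using bc_char[OF V ext, of W] char[OF True] by simp
  next
    case False then show ?thesis using bc_char[OF V ext, of W] by simp
  qed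
  have poly: "polytope ?Q" using V by (auto simp: polytope_def)
  have facets: "regular_simplex F" if F: "F facet_of ?Q" for F
  proof -
    have F1: "F face_of ?Q" "F \<noteq> {}" using F by (auto simp: facet_of_def)
    have "F \<noteq> ?Q" using F by (auto simp: facet_of_def)
    note fc = face_conv_ext[OF V F1 this]
    define W where "W = {v. v extreme_point_of F}"
    have W: "W \<subseteq> V" "R W" using fc(1) bc unfolding W_def by auto
    have "finite W" using W(1) V finite_subset by auto
    then have "regular_simplex (convex hull W)"
      by (rule regular_simplex_hull) (rule Rdist[OF W])
    then show ?thesis using fc(2) unfolding W_def by simp
  qed
  have iso: "simplicial_iso (boundary_complex ?Q) (KP n P)"
  proof (rule iso_generic[OF bij])
    show "\<And>T. T \<in> KP n P \<Longrightarrow> T \<subseteq> Lab n P" using KP_char[OF P] by simp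
    show "\<And>x. x \<in> Lab n P \<Longrightarrow> {x} \<in> KP n P" using KP_single[OF P] by simp
    show "\<And>W. W \<in> boundary_complex ?Q \<Longrightarrow> W \<subseteq> V" using bc by simp
    fix T assume T: "T \<subseteq> Lab n P"
    have "\<psi> ` T \<subseteq> V" using T bij by (auto simp: bij_betw_def)
    then show "T \<in> KP n P \<longleftrightarrow> \<psi> ` T \<in> boundary_complex ?Q" using corr[OF T] bc[of "\<psi> ` T"] by simp
  qed
  show ?thesis using poly dim facets iso by (intro exI[of _ ?Q]) auto
qed


lemma basis_indep: "\<not> affine_dependent (Basis :: 'a::euclidean_space set)"
  by (rule equidistant_indep[of _ "sqrt 2"]) (auto intro!: cross_dist dest: basis_neg)

lemma aff_dim_basis: "aff_dim (Basis :: 'a::euclidean_space set) = int DIM('a) - 1"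
  using aff_dim_affine_independent[OF basis_indep[where 'a='a]] by simp

lemma aff_hull_basis: "affine hull (Basis :: 'a::euclidean_space set) \<subseteq> {x. (\<Sum>Basis) \<bullet> x = 1}"
  by (rule hull_minimal) (auto simp: affine_hyperplane)

lemma case_cross:
  assumes dimA: "DIM('a::euclidean_space) = n + 1"
  shows "\<exists>Q::'a set. polytope Q \<and> aff_dim Q = int (n + 1)
            \<and> (\<forall>F. F facet_of Q \<longrightarrow> regular_simplex F)
            \<and> simplicial_iso (boundary_complex Q) (KP n ((\<lambda>i. {i}) ` {1..n+1}))"
proof -
  let ?U = "{1..n+1}"
  let ?P = "(\<lambda>i. {i}) ` ?U"
  let ?V = "Basis \<union> uminus ` Basis :: 'a set"
  have P: "partition_on ?U ?P" by (rule partition_on_singletons)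
  obtain \<beta> where \<beta>: "bij_betw \<beta> {1..card (Basis::'a set)} (Basis::'a set)"
    using ex_bij_betw_nat_finite_1[of "Basis::'a set"] by auto
  then have \<beta>: "bij_betw \<beta> ?U (Basis::'a set)" using dimA by simp
  have \<beta>B: "\<beta> i \<in> Basis" if "i \<in> ?U" for i using \<beta> that by (auto simp: bij_betw_def)
  have \<beta>inj: "i = j" if "i \<in> ?U" "j \<in> ?U" "\<beta> i = \<beta> j" for i j
    using \<beta> that by (auto simp: bij_betw_def inj_on_def)
  have \<beta>surj: "\<exists>i\<in>?U. e = \<beta> i" if "e \<in> Basis" for e
    using \<beta> that by (auto simp: bij_betw_def)
  define \<psi> where "\<psi> x = (case x of Inl i \<Rightarrow> \<beta> i | Inr B \<Rightarrow> - \<beta> (the_elem B))" for x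
  have \<psi>l: "\<psi> (Inl i) = \<beta> i" for i by (simp add: \<psi>_def)
  have \<psi>r: "\<psi> (Inr {i}) = - \<beta> i" for i by (simp add: \<psi>_def)
  define R where "R W = (W \<noteq> {} \<and> (\<forall>e\<in>Basis. \<not> (e \<in> W \<and> - e \<in> W)))" for W :: "'a set"
  have LabE: "x \<in> Lab n ?P \<longleftrightarrow> (\<exists>i\<in>?U. x = Inl i \<or> x = Inr {i})" for x
    unfolding Lab_def by auto
  have bij: "bij_betw \<psi> (Lab n ?P) ?V"
  proof -
    have "inj_on \<psi> (Lab n ?P)"
    proof (rule inj_onI)
      fix x y assume x: "x \<in> Lab n ?P" and y: "y \<in> Lab n ?P" and e: "\<psi> x = \<psi> y"
      obtain i where i: "i \<in> ?U" "x = Inl i \<or> x = Inr {i}" using x LabE by blast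
      obtain j where j: "j \<in> ?U" "y = Inl j \<or> y = Inr {j}" using y LabE by blast
      show "x = y"
        using i j e \<beta>inj[OF i(1) j(1)] basis_neg[OF \<beta>B[OF i(1)] \<beta>B[OF j(1)]]
          basis_neg[OF \<beta>B[OF j(1)] \<beta>B[OF i(1)]] by (auto simp: \<psi>l \<psi>r)
    qed
    moreover have "\<psi> ` Lab n ?P = ?V"
    proof
      show "\<psi> ` Lab n ?P \<subseteq> ?V" using LabE \<beta>B by (auto simp: \<psi>l \<psi>r)
      show "?V \<subseteq> \<psi> ` Lab n ?P"
      proof
        fix v assume "v \<in> ?V"
        then consider e where "e \<in> Basis" "v = e" | e where "e \<in> Basis" "v = - e" by blast
        then show "v \<in> \<psi> ` Lab n ?P"
        proof cases
          case 1
          then obtain i where "i \<in> ?U" "e = \<beta> i" using \<beta>surj by blast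
          then show ?thesis using 1 LabE by (auto simp: \<psi>l intro!: image_eqI[of _ _ "Inl i"])
        next
          case 2
          then obtain i where "i \<in> ?U" "e = \<beta> i" using \<beta>surj by blast
          then show ?thesis using 2 LabE by (auto simp: \<psi>r intro!: image_eqI[of _ _ "Inr {i}"])
        qed
      qed
    qed
    ultimately show ?thesis by (simp add: bij_betw_def)
  qed
  have injL: "inj_on \<psi> (Lab n ?P)" using bij by (simp add: bij_betw_def)
  have corr: "T \<in> KP n ?P \<longleftrightarrow> R (\<psi> ` T)" if T: "T \<subseteq> Lab n ?P" for T
  proof -
    have memL: "\<beta> i \<in> \<psi> ` T \<longleftrightarrow> Inl i \<in> T" if "i \<in> ?U" for i
      using inj_on_image_mem_iff[OF injL _ T, of "Inl i"] that LabE by (auto simp: \<psi>l)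
    have memR: "- \<beta> i \<in> \<psi> ` T \<longleftrightarrow> Inr {i} \<in> T" if "i \<in> ?U" for i
      using inj_on_image_mem_iff[OF injL _ T, of "Inr {i}"] that LabE by (auto simp: \<psi>r)
    have "(\<forall>B\<in>?P. \<not> (Inr B \<in> T \<and> Inl ` B \<subseteq> T)) \<longleftrightarrow> (\<forall>i\<in>?U. \<not> (Inr {i} \<in> T \<and> Inl i \<in> T))"
      by auto
    also have "\<dots> \<longleftrightarrow> (\<forall>e\<in>Basis. \<not> (e \<in> \<psi> ` T \<and> - e \<in> \<psi> ` T))"
      using memL memR \<beta>B \<beta>surj by metis
    finally show ?thesis using KP_char[OF P, of T] T unfolding R_def by auto
  qed
  have char: "(W \<noteq> {} \<and> W \<noteq> ?V \<and> (\<exists>a b. (\<forall>v\<in>?V. a \<bullet> v \<le> b) \<and> W = {v\<in>?V. a \<bullet> v = b})) \<longleftrightarrow> R W"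
    if "W \<subseteq> ?V" for W
    using cross_exposed[OF that] unfolding R_def .
  have Rsing: "R {v}" if "v \<in> ?V" for v
  proof -
    have "\<not> (e \<in> {v} \<and> - e \<in> {v})" if e: "e \<in> Basis" for e
      using basis_neg[OF e e] by auto
    then show ?thesis unfolding R_def by auto
  qed
  have Rdist: "dist x y = sqrt 2" if W: "W \<subseteq> ?V" "R W" "x \<in> W" "y \<in> W" "x \<noteq> y" for W x y
  proof (rule cross_dist)
    show "x \<in> ?V" "y \<in> ?V" "x \<noteq> y" using W by auto
    show "y \<noteq> - x"
    proof
      assume yx: "y = - x"
      have "x \<in> ?V" using W by auto
      then consider e where "e \<in> Basis" "x = e" | e where "e \<in> Basis" "x = - e" by blast
      then show False
      proof cases
        case 1 then show False using W yx unfolding R_def by blast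
      next
        case 2 then show False using W yx unfolding R_def by auto
      qed
    qed
  qed
  have dim: "aff_dim (convex hull ?V) = int (n+1)"
  proof -
    obtain e0 :: 'a where e0: "e0 \<in> Basis" using nonempty_Basis by blast
    have "(\<Sum>Basis) \<bullet> (- e0) = (-1::real)" using e0 by simp
    then have "- e0 \<notin> affine hull (Basis :: 'a set)" using aff_hull_basis by force
    then have "aff_dim (insert (- e0) (Basis :: 'a set)) = int DIM('a)"
      using aff_dim_insert[of "- e0" "Basis :: 'a set"] aff_dim_basis[where 'a='a] by simp
    moreover have "insert (- e0) (Basis :: 'a set) \<subseteq> convex hull ?V"
      using e0 hull_subset[of ?V convex] by auto
    ultimately have "int DIM('a) \<le> aff_dim (convex hull ?V)" by (metis aff_dim_subset)
    then show ?thesis using aff_dim_le_DIM[of "convex hull ?V"] dimA by simp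
  qed
  show ?thesis
    by (rule realize_generic[of ?V R "sqrt 2" n \<psi>, OF _ char Rsing Rdist dim bij P corr]) auto
qed


lemma simplex_exposed:
  fixes V :: "'a::euclidean_space set"
  assumes ind: "\<not> affine_dependent V" and W: "W \<subseteq> V"
  shows "\<exists>a b. (\<forall>v\<in>V. a \<bullet> v \<le> b) \<and> W = {v\<in>V. a \<bullet> v = b}"
proof -
  have V: "finite V" using aff_independent_finite[OF ind] .
  let ?Q = "convex hull V"
  have F: "convex hull W face_of ?Q" using face_of_convex_hull_affine_independent[OF ind] W by blast
  have "polytope ?Q" using V by (auto simp: polytope_def)
  then have poly: "polyhedron ?Q" by (rule polytope_imp_polyhedron)
  have "convex hull W exposed_face_of ?Q" using exposed_face_of_polyhedron[OF poly] F by simp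
  then obtain a b where ab: "?Q \<subseteq> {x. a \<bullet> x \<le> b}" "convex hull W = ?Q \<inter> {x. a \<bullet> x = b}"
    unfolding exposed_face_of_def by blast
  have VQ: "V \<subseteq> ?Q" by (rule hull_subset)
  have "W = {v\<in>V. a \<bullet> v = b}"
  proof
    show "W \<subseteq> {v\<in>V. a \<bullet> v = b}" using W ab(2) hull_subset[of W convex] by auto
    show "{v\<in>V. a \<bullet> v = b} \<subseteq> W"
    proof
      fix v assume v: "v \<in> {v\<in>V. a \<bullet> v = b}"
      then have vW: "v \<in> convex hull W" using ab(2) VQ by auto
      have "v extreme_point_of ?Q" using v extreme_point_of_convex_hull_affine_independent[OF ind] by auto
      then have "v extreme_point_of convex hull W" using extreme_point_of_face[OF F] vW by simp
      then show "v \<in> W" by (rule extreme_point_of_convex_hull)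
    qed
  qed
  then show ?thesis using ab(1) VQ by blast
qed

lemma inner_One_One: "(\<Sum>Basis :: 'a::euclidean_space) \<bullet> (\<Sum>Basis) = real DIM('a)"
  by (simp add: inner_sum_right)

lemma case_simplex:
  assumes dimA: "DIM('a::euclidean_space) = n + 1"
  shows "\<exists>Q::'a set. polytope Q \<and> aff_dim Q = int (n + 1)
            \<and> (\<forall>F. F facet_of Q \<longrightarrow> regular_simplex F)
            \<and> simplicial_iso (boundary_complex Q) (KP n {{1..n+1}})"
proof -
  let ?U = "{1..n+1}"
  let ?P = "{?U}"
  define s where "s = sqrt (real n + 2)"
  define t where "t = (1 - s) / (real n + 1)"
  define p where "p = t *\<^sub>R (\<Sum>Basis :: 'a)"
  let ?V = "insert p (Basis :: 'a set)"
  have P: "partition_on ?U ?P" by (rule partition_on_space) simp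
  have s2: "s^2 = real n + 2" unfolding s_def by simp
  have s1: "s > 1" unfolding s_def by simp
  have tneg: "t < 0" unfolding t_def using s1 by (simp add: divide_neg_pos)
  have h: "t * (real n + 1) = 1 - s" unfolding t_def by simp
  have "(real n + 1) * ((real n + 1) * t^2 - 2 * t - 1) = (t * (real n + 1))^2 - 2 * (t * (real n + 1)) - (real n + 1)"
    by (simp add: algebra_simps power2_eq_square)
  also have "\<dots> = 0" unfolding h using s2 by (simp add: algebra_simps power2_eq_square)
  finally have teq: "(real n + 1) * t^2 - 2 * t - 1 = 0" by simp
  have One1: "(\<Sum>Basis :: 'a) \<bullet> e = 1" if "e \<in> Basis" for e using that by simp
  have OneOne: "(\<Sum>Basis :: 'a) \<bullet> (\<Sum>Basis) = real n + 1" using inner_One_One[where 'a='a] dimA by simp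
  have pB: "p \<notin> Basis"
  proof
    assume "p \<in> Basis"
    then have "(\<Sum>Basis :: 'a) \<bullet> p = 1" by simp
    moreover have "(\<Sum>Basis :: 'a) \<bullet> p = t * (real n + 1)" unfolding p_def using OneOne by simp
    ultimately show False using tneg by (smt (verit) mult_neg_pos of_nat_0_le_iff)
  qed
  have distp: "dist e p = sqrt 2" if e: "e \<in> Basis" for e
  proof -
    have "(dist e p)^2 = (e - p) \<bullet> (e - p)" by (simp add: dist_norm power2_norm_eq_inner)
    also have "\<dots> = e \<bullet> e - 2 * t * ((\<Sum>Basis :: 'a) \<bullet> e) + t^2 * ((\<Sum>Basis :: 'a) \<bullet> (\<Sum>Basis))"
      unfolding p_def by (simp add: inner_diff_left inner_diff_right inner_commute algebra_simps power2_eq_square)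
    also have "\<dots> = 2" using e OneOne teq by (simp add: algebra_simps power2_eq_square)
    finally show ?thesis by (metis zero_le_dist real_sqrt_unique)
  qed
  have distV: "dist x y = sqrt 2" if xy: "x \<in> ?V" "y \<in> ?V" "x \<noteq> y" for x y
  proof -
    consider "x = p" "y \<in> Basis" | "y = p" "x \<in> Basis" | "x \<in> Basis" "y \<in> Basis" using xy by auto
    then show ?thesis
    proof cases
      case 1 then show ?thesis using distp[of y] by (simp add: dist_commute)
    next
      case 2 then show ?thesis using distp by simp
    next
      case 3 then show ?thesis using cross_dist[of x y] xy basis_neg by auto
    qed
  qed
  have Vfin: "finite ?V" by simp
  have ind: "\<not> affine_dependent ?V" by (rule equidistant_indep[OF Vfin distV])
  have cardV: "card ?V = n + 2" using pB dimA by simp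
  have dim: "aff_dim (convex hull ?V) = int (n+1)"
    using aff_dim_affine_independent[OF ind] cardV by (simp add: aff_dim_convex_hull)
  obtain \<beta> where \<beta>: "bij_betw \<beta> {1..card (Basis::'a set)} (Basis::'a set)"
    using ex_bij_betw_nat_finite_1[of "Basis::'a set"] by auto
  then have \<beta>: "bij_betw \<beta> ?U (Basis::'a set)" using dimA by simp
  define \<psi> where "\<psi> x = (case x of Inl i \<Rightarrow> \<beta> i | Inr B \<Rightarrow> p)" for x :: "nat + nat set"
  have Lab: "Lab n ?P = insert (Inr ?U) (Inl ` ?U)" unfolding Lab_def by auto
  have \<beta>B: "\<beta> i \<in> Basis" if "i \<in> ?U" for i using \<beta> that by (auto simp: bij_betw_def)
  have \<beta>inj: "inj_on \<beta> ?U" using \<beta> by (auto simp: bij_betw_def)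
  have \<beta>im: "\<beta> ` ?U = Basis" using \<beta> by (auto simp: bij_betw_def)
  have bij: "bij_betw \<psi> (Lab n ?P) ?V"
    unfolding Lab bij_betw_def
  proof
    show "inj_on \<psi> (insert (Inr ?U) (Inl ` ?U))"
    proof (rule inj_onI)
      fix x y assume x: "x \<in> insert (Inr ?U) (Inl ` ?U)" and y: "y \<in> insert (Inr ?U) (Inl ` ?U)"
        and e: "\<psi> x = \<psi> y"
      have px: "\<psi> (Inr ?U) = p" "\<psi> (Inl i) = \<beta> i" for i by (simp_all add: \<psi>_def)
      from x consider "x = Inr ?U" | i where "i \<in> ?U" "x = Inl i" by auto
      then show "x = y"
      proof cases
        case 1
        from y consider "y = Inr ?U" | j where "j \<in> ?U" "y = Inl j" by auto
        then show ?thesis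
        proof cases
          case 1 then show ?thesis using \<open>x = Inr ?U\<close> by simp
        next
          case 2 then show ?thesis using \<open>x = Inr ?U\<close> e px \<beta>B[of j] pB by auto
        qed
      next
        case 2
        note xi = this
        from y consider "y = Inr ?U" | j where "j \<in> ?U" "y = Inl j" by auto
        then show ?thesis
        proof cases
          case 1 then show ?thesis using xi e px \<beta>B[of i] pB by auto
        next
          case 2
          then have bij: "\<beta> i = \<beta> j" using xi e px by simp
          show ?thesis using inj_onD[OF \<beta>inj bij] xi 2 by simp
        qed
      qed
    qed
    show "\<psi> ` insert (Inr ?U) (Inl ` ?U) = ?V"
      using \<beta>im by (simp add: \<psi>_def image_image)
  qed
  define R where "R W = (W \<noteq> {} \<and> W \<noteq> ?V)" for W :: "'a set"
  have char: "(W \<noteq> {} \<and> W \<noteq> ?V \<and> (\<exists>a b. (\<forall>v\<in>?V. a \<bullet> v \<le> b) \<and> W = {v\<in>?V. a \<bullet> v = b})) \<longleftrightarrow> R W"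
    if "W \<subseteq> ?V" for W
    using simplex_exposed[OF ind that] unfolding R_def by blast
  have Rsing: "R {v}" if "v \<in> ?V" for v
  proof -
    obtain e :: 'a where "e \<in> Basis" using nonempty_Basis by blast
    then have "{v} \<noteq> ?V" using pB by auto
    then show ?thesis unfolding R_def by simp
  qed
  have Rdist: "dist x y = sqrt 2" if W: "W \<subseteq> ?V" "R W" "x \<in> W" "y \<in> W" "x \<noteq> y" for W x y
    using distV[of x y] W by blast
  have injL: "inj_on \<psi> (Lab n ?P)" using bij by (simp add: bij_betw_def)
  have corr: "T \<in> KP n ?P \<longleftrightarrow> R (\<psi> ` T)" if T: "T \<subseteq> Lab n ?P" for T
  proof -
    have "\<psi> ` T = ?V \<longleftrightarrow> \<psi> ` T = \<psi> ` Lab n ?P" using bij by (simp add: bij_betw_def)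
    also have "\<dots> \<longleftrightarrow> T = Lab n ?P" using inj_on_image_eq_iff[OF injL T] by simp
    also have "\<dots> \<longleftrightarrow> (Inr ?U \<in> T \<and> Inl ` ?U \<subseteq> T)" using T unfolding Lab by auto
    finally show ?thesis using KP_char[OF P, of T] T unfolding R_def by auto
  qed
  show ?thesis
    by (rule realize_generic[of ?V R "sqrt 2" n \<psi>, OF _ char Rsing Rdist dim bij P corr]) auto
qed


lemma inner_One_One2: "(\<Sum>Basis :: 'a::euclidean_space) \<bullet> (\<Sum>Basis) = real DIM('a)"
  by (simp add: inner_sum_right)

lemma case_bipyr_geom:
  assumes dimA: "DIM('a::euclidean_space) = n + 1"
  and c_def: "c = 1 / (real n + 1)" and s_def: "s = sqrt (real n + 2) / (real n + 1)"
  and u_def: "u = (\<lambda>e::'a. e - c *\<^sub>R (\<Sum>Basis))" and h_def: "h = s *\<^sub>R (\<Sum>Basis :: 'a)"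
  and V_def: "V = insert h (insert (- h) (u ` Basis))"
  and R_def: "R = (\<lambda>W. W \<noteq> {} \<and> \<not> (h \<in> W \<and> - h \<in> W) \<and> \<not> (u ` Basis \<subseteq> W))"
  shows "\<And>W. W \<subseteq> V \<Longrightarrow> (W \<noteq> {} \<and> W \<noteq> V \<and> (\<exists>a b. (\<forall>v\<in>V. a \<bullet> v \<le> b) \<and> W = {v\<in>V. a \<bullet> v = b})) \<longleftrightarrow> R W"
    and "\<And>x y. x \<in> V \<Longrightarrow> y \<in> V \<Longrightarrow> x \<noteq> y \<Longrightarrow> \<not> (x = h \<and> y = - h) \<Longrightarrow> \<not> (x = - h \<and> y = h) \<Longrightarrow> dist x y = sqrt 2"
    and "h \<notin> u ` Basis" "- h \<notin> u ` Basis" "h \<noteq> - h" "inj_on u Basis"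
    and "aff_dim (convex hull V) = int (n + 1)"
proof -
  let ?O = "\<Sum>Basis :: 'a"
  have m: "real n + 1 > 0" by simp
  have cm: "c * (real n + 1) = 1" unfolding c_def by simp
  have cpos: "c > 0" unfolding c_def by simp
  have cm': "c + c * real n = 1" using cm by (simp add: algebra_simps)
  have ccm: "c * c + c * (c * real n) = c"
  proof -
    have "c * c + c * (c * real n) = c * (c + c * real n)" by (simp add: algebra_simps)
    also have "\<dots> = c" by (simp only: cm' mult_1_right)
    finally show ?thesis .
  qed
  have spos: "s > 0" unfolding s_def by simp
  have s2: "s^2 * (real n + 1) = (real n + 2) / (real n + 1)"
    unfolding s_def using m by (simp add: power_divide power2_eq_square[symmetric]) (simp add: power2_eq_square)
  have Oe: "?O \<bullet> e = 1" if "e \<in> Basis" for e using that by simp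
  have Oe': "e \<bullet> ?O = 1" if "e \<in> Basis" for e using Oe[OF that] by (simp add: inner_commute)
  have OO: "?O \<bullet> ?O = real n + 1" using inner_One_One2[where 'a='a] dimA by simp
  have Ou: "?O \<bullet> u e = 0" if "e \<in> Basis" for e
    using that cm Oe' unfolding u_def by (simp add: inner_diff_right OO algebra_simps)
  have Oh: "?O \<bullet> h = s * (real n + 1)" unfolding h_def using OO by simp
  have hnz: "?O \<bullet> h \<noteq> 0" using Oh spos by simp
  show hu: "h \<notin> u ` Basis" using Ou hnz by auto
  show mhu: "- h \<notin> u ` Basis"
  proof
    assume "- h \<in> u ` Basis"
    then obtain e where "e \<in> Basis" "- h = u e" by auto
    then have "?O \<bullet> (- h) = 0" using Ou by simp
    then show False using hnz by simp
  qed
  show hh: "h \<noteq> - h"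
  proof
    assume "h = - h"
    then have "?O \<bullet> h = - (?O \<bullet> h)" by (metis inner_minus_right)
    then show False using hnz by linarith
  qed
  show uinj: "inj_on u Basis" unfolding u_def by (rule inj_onI) simp
  have uu: "u e \<bullet> u e' = (if e = e' then 1 else 0) - c" if "e \<in> Basis" "e' \<in> Basis" for e e'
  proof -
    have "u e \<bullet> u e' = e \<bullet> e' - c * (?O \<bullet> e) - c * (?O \<bullet> e') + c * c * (?O \<bullet> ?O)"
      unfolding u_def by (simp add: inner_diff_left inner_diff_right inner_commute algebra_simps)
    also have "\<dots> = (if e = e' then 1 else 0) - c"
      using that Oe Oe' OO cm ccm by (simp add: inner_Basis algebra_simps)
    finally show ?thesis .
  qed
  have duu: "dist (u e) (u e') = sqrt 2" if "e \<in> Basis" "e' \<in> Basis" "e \<noteq> e'" for e e'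
  proof -
    have "dist (u e) (u e') = dist e e'" unfolding u_def by (simp add: dist_norm)
    then show ?thesis using cross_dist[of e e'] that basis_neg by auto
  qed
  have duh: "dist (u e) (\<sigma> *\<^sub>R h) = sqrt 2" if "e \<in> Basis" "\<sigma> = 1 \<or> \<sigma> = -1" for e \<sigma>
  proof -
    have "(dist (u e) (\<sigma> *\<^sub>R h))^2 = u e \<bullet> u e - 2 * \<sigma> * s * (?O \<bullet> u e) + \<sigma>^2 * s^2 * (?O \<bullet> ?O)"
      unfolding dist_norm power2_norm_eq_inner h_def
      by (simp add: inner_diff_left inner_diff_right inner_commute algebra_simps power2_eq_square)
    also have "\<dots> = 1 - c + (real n + 2) / (real n + 1)"
      using that uu[of e e] Ou[of e] OO s2 by (auto simp: algebra_simps)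
    also have "\<dots> = 2"
    proof -
      have "(real n + 2) / (real n + 1) - c = 1" unfolding c_def using m
        by (simp add: diff_divide_distrib[symmetric])
      then show ?thesis by linarith
    qed
    finally show ?thesis by (metis zero_le_dist real_sqrt_unique)
  qed
  show distV: "dist x y = sqrt 2" if xy: "x \<in> V" "y \<in> V" "x \<noteq> y" "\<not> (x = h \<and> y = - h)" "\<not> (x = - h \<and> y = h)" for x y
  proof -
    consider "x \<in> {h, -h}" "y \<in> {h, -h}" | "x \<in> {h, -h}" "y \<in> u ` Basis" | "y \<in> {h, -h}" "x \<in> u ` Basis"
      | "x \<in> u ` Basis" "y \<in> u ` Basis" using xy unfolding V_def by auto
    then show ?thesis
    proof cases
      case 1 then show ?thesis using xy by auto
    next
      case 2
      then obtain e where e: "e \<in> Basis" "y = u e" by auto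
      have "dist (u e) h = sqrt 2" "dist (u e) (- h) = sqrt 2" using duh[OF e(1), of 1] duh[OF e(1), of "-1"] by simp_all
      then show ?thesis using 2 e by (auto simp: dist_commute)
    next
      case 3
      then obtain e where e: "e \<in> Basis" "x = u e" by auto
      have "dist (u e) h = sqrt 2" "dist (u e) (- h) = sqrt 2" using duh[OF e(1), of 1] duh[OF e(1), of "-1"] by simp_all
      then show ?thesis using 3 e by auto
    next
      case 4 then show ?thesis using duu xy by auto
    qed
  qed
  have sumu: "(\<Sum>e\<in>Basis. u e) = 0"
  proof -
    have "(\<Sum>e\<in>Basis. u e) = ?O - (\<Sum>e\<in>(Basis::'a set). c *\<^sub>R ?O)" unfolding u_def by (simp add: sum_subtractf)
    also have "\<dots> = ?O - (c * real DIM('a)) *\<^sub>R ?O" by (simp add: sum_constant_scaleR mult.commute)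
    also have "\<dots> = 0" using cm dimA by (simp add: algebra_simps)
    finally show ?thesis .
  qed
  have VQ: "V \<subseteq> convex hull V" by (rule hull_subset)
  show "aff_dim (convex hull V) = int (n + 1)"
  proof -
    have sub: "insert h (u ` Basis) \<subseteq> V" unfolding V_def by auto
    have fin: "finite (insert h (u ` Basis))" by simp
    have dS: "dist x y = sqrt 2" if xy: "x \<in> insert h (u ` Basis)" "y \<in> insert h (u ` Basis)" "x \<noteq> y" for x y
    proof (rule distV)
      show "x \<in> V" "y \<in> V" "x \<noteq> y" using xy sub by auto
      have "x \<noteq> - h" "y \<noteq> - h" using xy hh mhu by auto
      then show "\<not> (x = h \<and> y = - h)" "\<not> (x = - h \<and> y = h)" by auto
    qed
    have "\<not> affine_dependent (insert h (u ` Basis))"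
      by (rule equidistant_indep[OF fin dS])
    moreover have "card (insert h (u ` Basis)) = n + 2"
      using hu card_image[OF uinj] dimA by simp
    ultimately have "aff_dim (insert h (u ` Basis)) = int (n + 1)"
      using aff_dim_affine_independent by fastforce
    then have "int (n+1) \<le> aff_dim (convex hull V)" using sub VQ by (metis aff_dim_subset order_trans)
    then show ?thesis using aff_dim_le_DIM[of "convex hull V"] dimA by simp
  qed
  fix W assume WV: "W \<subseteq> V"
  show "(W \<noteq> {} \<and> W \<noteq> V \<and> (\<exists>a b. (\<forall>v\<in>V. a \<bullet> v \<le> b) \<and> W = {v\<in>V. a \<bullet> v = b})) \<longleftrightarrow> R W"
  proof
    assume "W \<noteq> {} \<and> W \<noteq> V \<and> (\<exists>a b. (\<forall>v\<in>V. a \<bullet> v \<le> b) \<and> W = {v\<in>V. a \<bullet> v = b})"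
    then obtain a b where W: "W \<noteq> {}" "W \<noteq> V" "\<forall>v\<in>V. a \<bullet> v \<le> b" "W = {v\<in>V. a \<bullet> v = b}" by blast
    have sa: "(\<Sum>e\<in>Basis. a \<bullet> u e) = 0" using sumu by (simp add: inner_sum_right[symmetric])
    have ule: "a \<bullet> u e \<le> b" if "e \<in> Basis" for e using W(3) that unfolding V_def by auto
    have hle: "a \<bullet> h \<le> b" "- (a \<bullet> h) \<le> b" using W(3) unfolding V_def by auto
    have notboth: "\<not> (h \<in> W \<and> - h \<in> W)"
    proof
      assume "h \<in> W \<and> - h \<in> W"
      then have "a \<bullet> h = b" "- (a \<bullet> h) = b" using W(4) by auto
      then have b0: "b = 0" by simp
      have "\<forall>e\<in>Basis. - (a \<bullet> u e) = 0"
        using sum_nonneg_eq_0_iff[of Basis "\<lambda>e. - (a \<bullet> u e)"] sa ule b0 by (simp add: sum_negf)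
      then have "u ` Basis \<subseteq> W" using W(4) b0 unfolding V_def by auto
      then have "W = V" using \<open>h \<in> W \<and> - h \<in> W\<close> WV unfolding V_def by auto
      then show False using W(2) by simp
    qed
    have notall: "\<not> (u ` Basis \<subseteq> W)"
    proof
      assume all: "u ` Basis \<subseteq> W"
      then have "a \<bullet> u e = b" if "e \<in> Basis" for e using W(4) that by auto
      then have "(\<Sum>e\<in>Basis. a \<bullet> u e) = real DIM('a) * b" by simp
      then have b0: "b = 0" using sa by simp
      then have "a \<bullet> h = 0" using hle by simp
      then have "h \<in> W" "- h \<in> W" using W(4) b0 unfolding V_def by auto
      then have "W = V" using all WV unfolding V_def by auto
      then show False using W(2) by simp
    qed
    show "R W" unfolding R_def using W(1) notboth notall by blast
  next
    assume "R W"
    then have RW: "W \<noteq> {}" "\<not> (h \<in> W \<and> - h \<in> W)" "\<not> (u ` Basis \<subseteq> W)" unfolding R_def by auto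
    define K where "K = {e\<in>Basis. u e \<notin> W}"
    have Kfin: "finite K" unfolding K_def by simp
    have Kne: "K \<noteq> {}" using RW(3) unfolding K_def by auto
    define k where "k = real (card K)"
    have kpos: "k > 0" unfolding k_def using Kfin Kne by (simp add: card_gt_0_iff)
    define z where "z = (if h \<in> W then 1 else if - h \<in> W then -1 else (0::real))"
    define \<gamma> where "\<gamma> = (k + z * c * k / s) / (real n + 1)"
    define a where "a = \<gamma> *\<^sub>R ?O - (\<Sum>e\<in>K. e)"
    define b where "b = c * k"
    have bpos: "b > 0" unfolding b_def using cpos kpos by simp
    have KB: "K \<subseteq> Basis" unfolding K_def by auto
    have sK: "(\<Sum>e\<in>K. e) \<bullet> x = (\<Sum>e\<in>K. e \<bullet> x)" for x by (simp add: inner_sum_left)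
    have au: "a \<bullet> u e' = b - (if e' \<in> K then 1 else 0)" if e': "e' \<in> Basis" for e'
    proof -
      have "(\<Sum>e\<in>K. e \<bullet> u e') = (\<Sum>e\<in>K. (if e = e' then 1 else 0) - c)"
      proof (rule sum.cong)
        fix e assume "e \<in> K"
        then have "e \<in> Basis" using KB by auto
        then show "e \<bullet> u e' = (if e = e' then 1 else 0) - c"
          using e' Oe'[of e] unfolding u_def by (simp add: inner_diff_right inner_Basis)
      qed simp
      also have "\<dots> = (if e' \<in> K then 1 else 0) - c * k"
        using Kfin by (simp add: sum_subtractf k_def)
      finally have "(\<Sum>e\<in>K. e \<bullet> u e') = (if e' \<in> K then 1 else 0) - c * k" .
      then show ?thesis unfolding a_def b_def using Ou[OF e'] sK[of "u e'"]
        by (simp add: inner_diff_left)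
    qed
    have sKO: "(\<Sum>e\<in>K. e) \<bullet> ?O = k"
      using sK[of ?O] Oe KB by (simp add: k_def inner_commute subset_eq)
    have ah: "a \<bullet> h = z * b"
    proof -
      have "a \<bullet> h = s * (\<gamma> * (real n + 1) - k)"
        unfolding a_def h_def using OO sKO by (simp add: inner_diff_left algebra_simps)
      also have "\<gamma> * (real n + 1) = k + z * c * k / s" unfolding \<gamma>_def by simp
      finally show ?thesis unfolding b_def using spos by (simp add: field_simps)
    qed
    have amh: "a \<bullet> (- h) = - z * b" using ah by simp
    have zb: "z = 1 \<or> z = -1 \<or> z = 0" unfolding z_def by auto
    have le: "\<forall>v\<in>V. a \<bullet> v \<le> b"
    proof
      fix v assume "v \<in> V"
      then consider "v = h" | "v = - h" | e where "e \<in> Basis" "v = u e" unfolding V_def by auto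
      then show "a \<bullet> v \<le> b"
      proof cases
        case 1 then show ?thesis using ah zb bpos by auto
      next
        case 2 then show ?thesis using amh zb bpos by auto
      next
        case 3 then show ?thesis using au by simp
      qed
    qed
    have eqW: "W = {v\<in>V. a \<bullet> v = b}"
    proof
      show "W \<subseteq> {v\<in>V. a \<bullet> v = b}"
      proof
        fix v assume vW: "v \<in> W"
        then have "v \<in> V" using WV by auto
        then consider "v = h" | "v = - h" | e where "e \<in> Basis" "v = u e" unfolding V_def by auto
        then show "v \<in> {v\<in>V. a \<bullet> v = b}"
        proof cases
          case 1 then have "z = 1" using vW unfolding z_def by simp
          then show ?thesis using ah 1 \<open>v \<in> V\<close> by simp
        next
          case 2 then have "z = -1" using vW RW(2) hh unfolding z_def by auto
          then show ?thesis using amh 2 \<open>v \<in> V\<close> by simp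
        next
          case 3 then have "e \<notin> K" using vW unfolding K_def by auto
          then show ?thesis using au[of e] 3 \<open>v \<in> V\<close> by simp
        qed
      qed
      show "{v\<in>V. a \<bullet> v = b} \<subseteq> W"
      proof
        fix v assume v: "v \<in> {v\<in>V. a \<bullet> v = b}"
        then consider "v = h" | "v = - h" | e where "e \<in> Basis" "v = u e" unfolding V_def by auto
        then show "v \<in> W"
        proof cases
          case 1 then have "z * b = b" using v ah by simp
          then have "z = 1" using bpos by simp
          then show ?thesis using 1 unfolding z_def by (auto split: if_splits)
        next
          case 2 then have "- z * b = b" using v amh by simp
          then have "(z + 1) * b = 0" by (simp add: algebra_simps)
          then have "z = -1" using bpos by simp
          then show ?thesis using 2 unfolding z_def by (auto split: if_splits)
        next
          case 3 then have "e \<notin> K" using v au[of e] by (auto split: if_splits)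
          then show ?thesis using 3 unfolding K_def by auto
        qed
      qed
    qed
    have "W \<noteq> V"
    proof
      assume "W = V"
      then have "u ` Basis \<subseteq> W" unfolding V_def by auto
      then show False using RW(3) by simp
    qed
    then show "W \<noteq> {} \<and> W \<noteq> V \<and> (\<exists>a b. (\<forall>v\<in>V. a \<bullet> v \<le> b) \<and> W = {v\<in>V. a \<bullet> v = b})"
      using RW(1) le eqW by (intro conjI exI[of _ a] exI[of _ b]) auto
  qed
qed


lemma inj_image_subset_iff:
  assumes "inj_on f C" "A \<subseteq> C" "B \<subseteq> C"
  shows "f ` A \<subseteq> f ` B \<longleftrightarrow> A \<subseteq> B"
proof
  assume "f ` A \<subseteq> f ` B"
  then show "A \<subseteq> B" using inj_on_image_mem_iff[OF assms(1) _ assms(3)] assms(2) by blast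
qed auto

lemma case_bipyr:
  assumes dimA: "DIM('a::euclidean_space) = n + 1" and n1: "n \<ge> 1" and aU: "a \<in> {1..n+1}"
  shows "\<exists>Q::'a set. polytope Q \<and> aff_dim Q = int (n + 1)
            \<and> (\<forall>F. F facet_of Q \<longrightarrow> regular_simplex F)
            \<and> simplicial_iso (boundary_complex Q) (KP n {{a}, {1..n+1} - {a}})"
proof -
  define c where "c = 1 / (real n + 1)"
  define s where "s = sqrt (real n + 2) / (real n + 1)"
  define u where "u = (\<lambda>e::'a. e - c *\<^sub>R (\<Sum>Basis))"
  define h where "h = s *\<^sub>R (\<Sum>Basis :: 'a)"
  define V where "V = insert h (insert (- h) (u ` Basis))"
  define R where "R = (\<lambda>W. W \<noteq> {} \<and> \<not> (h \<in> W \<and> - h \<in> W) \<and> \<not> (u ` Basis \<subseteq> W))"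
  note G = case_bipyr_geom[OF dimA c_def s_def u_def h_def V_def R_def]
  let ?U = "{1..n+1}"
  define A where "A = {a}"
  define B where "B = ?U - {a}"
  let ?P = "{A, B}"
  have AB: "A \<noteq> B" unfolding A_def B_def by auto
  have Bne: "B \<noteq> {}"
  proof -
    have "(if a = 1 then 2 else 1) \<in> B" unfolding B_def using n1 aU by auto
    then show ?thesis by auto
  qed
  have P1: "{} \<notin> ?P" using Bne by (auto simp: A_def)
  have P2: "\<Union>?P = ?U" using aU by (auto simp: A_def B_def)
  have P3: "disjoint ?P" unfolding disjoint_def by (auto simp: A_def B_def)
  have P: "partition_on ?U ?P" unfolding partition_on_def using P1 P2 P3 by simp
  obtain \<beta> where \<beta>: "bij_betw \<beta> {1..card (Basis::'a set)} (Basis::'a set)"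
    using ex_bij_betw_nat_finite_1[of "Basis::'a set"] by auto
  then have \<beta>: "bij_betw \<beta> ?U (Basis::'a set)" using dimA by simp
  have \<beta>B: "\<beta> i \<in> Basis" if "i \<in> ?U" for i using \<beta> that by (auto simp: bij_betw_def)
  have \<beta>surj: "\<exists>i\<in>?U. e = \<beta> i" if "e \<in> Basis" for e
    using \<beta> that by (auto simp: bij_betw_def)
  define \<psi> where "\<psi> x = (case x of Inl i \<Rightarrow> (if i = a then h else u (\<beta> i)) | Inr C \<Rightarrow> (if C = A then - h else u (\<beta> a)))" for x
  have \<psi>1: "\<psi> (Inl a) = h" by (simp add: \<psi>_def)
  have \<psi>2: "\<psi> (Inr A) = - h" by (simp add: \<psi>_def)
  have \<psi>3: "\<psi> (Inr B) = u (\<beta> a)" using AB by (simp add: \<psi>_def)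
  have \<psi>4: "\<psi> (Inl i) = u (\<beta> i)" if "i \<in> B" for i using that by (simp add: \<psi>_def B_def)
  have Lab: "Lab n ?P = Inl ` ?U \<union> {Inr A, Inr B}" unfolding Lab_def by auto
  have base: "\<psi> ` insert (Inr B) (Inl ` B) = u ` Basis"
  proof
    show "\<psi> ` insert (Inr B) (Inl ` B) \<subseteq> u ` Basis" using \<psi>3 \<psi>4 \<beta>B aU by (auto simp: B_def)
    show "u ` Basis \<subseteq> \<psi> ` insert (Inr B) (Inl ` B)"
    proof
      fix v assume "v \<in> u ` Basis"
      then obtain e where e: "e \<in> Basis" "v = u e" by auto
      then obtain i where i: "i \<in> ?U" "e = \<beta> i" using \<beta>surj by blast
      show "v \<in> \<psi> ` insert (Inr B) (Inl ` B)"
      proof (cases "i = a")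
        case True then show ?thesis using e i \<psi>3 by auto
      next
        case False then have "i \<in> B" using i unfolding B_def by auto
        then show ?thesis using e i \<psi>4 by (auto intro!: image_eqI[of _ _ "Inl i"])
      qed
    qed
  qed
  have LabS: "Lab n ?P = {Inl a, Inr A} \<union> insert (Inr B) (Inl ` B)" unfolding Lab using aU by (auto simp: B_def)
  have imL: "\<psi> ` Lab n ?P = V" unfolding LabS image_Un base using \<psi>1 \<psi>2 by (auto simp: V_def)
  have cardV: "card V = n + 3"
  proof -
    have "card (u ` Basis) = n + 1" using card_image[OF G(6)] dimA by simp
    then show ?thesis unfolding V_def using G(3,4,5) by simp
  qed
  have cardL: "card (Lab n ?P) = n + 3"
  proof -
    have "card (Inl ` ?U :: (nat + nat set) set) = n + 1" by (simp add: card_image)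
    moreover have "card {Inr A, Inr B :: nat + nat set} = 2" using AB by simp
    ultimately show ?thesis unfolding Lab by (subst card_Un_disjoint) auto
  qed
  have injL: "inj_on \<psi> (Lab n ?P)"
    using inj_on_iff_eq_card[of "Lab n ?P" \<psi>] imL cardV cardL by (simp add: Lab)
  have bij: "bij_betw \<psi> (Lab n ?P) V" using injL imL by (simp add: bij_betw_def)
  have corr: "T \<in> KP n ?P \<longleftrightarrow> R (\<psi> ` T)" if T: "T \<subseteq> Lab n ?P" for T
  proof -
    have m1: "h \<in> \<psi> ` T \<longleftrightarrow> Inl a \<in> T"
      using inj_on_image_mem_iff[OF injL _ T, of "Inl a"] \<psi>1 unfolding LabS by auto
    have m2: "- h \<in> \<psi> ` T \<longleftrightarrow> Inr A \<in> T"
      using inj_on_image_mem_iff[OF injL _ T, of "Inr A"] \<psi>2 unfolding LabS by auto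
    have m3: "u ` Basis \<subseteq> \<psi> ` T \<longleftrightarrow> insert (Inr B) (Inl ` B) \<subseteq> T"
      unfolding base[symmetric] by (rule inj_image_subset_iff[OF injL _ T]) (auto simp: LabS)
    have "(\<forall>C\<in>?P. \<not> (Inr C \<in> T \<and> Inl ` C \<subseteq> T)) \<longleftrightarrow>
          \<not> (Inl a \<in> T \<and> Inr A \<in> T) \<and> \<not> (insert (Inr B) (Inl ` B) \<subseteq> T)"
      by (auto simp: A_def)
    then show ?thesis using KP_char[OF P, of T] T m1 m2 m3 unfolding R_def by auto
  qed
  have Rsing: "R {v}" if "v \<in> V" for v
  proof -
    have "card (u ` Basis) = n + 1" using card_image[OF G(6)] dimA by simp
    then have "\<not> (u ` Basis \<subseteq> {v})" using n1 by (metis card_mono finite.emptyI finite_insert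
          card_1_singleton_iff le_antisym add_le_cancel_right card.empty empty_subsetI
          card_insert_disjoint insert_absorb le_zero_eq not_one_le_zero one_le_numeral subset_singletonD
          Suc_eq_plus1 add_is_1 card_0_eq card_eq_0_iff le_add2 nat_le_linear)
    then show ?thesis unfolding R_def using G(5) by auto
  qed
  have Rdist: "dist x y = sqrt 2" if W: "W \<subseteq> V" "R W" "x \<in> W" "y \<in> W" "x \<noteq> y" for W x y
  proof (rule G(2))
    show "x \<in> V" "y \<in> V" "x \<noteq> y" using W by auto
    show "\<not> (x = h \<and> y = - h)" "\<not> (x = - h \<and> y = h)" using W unfolding R_def by auto
  qed
  have "\<exists>Q::'a set. polytope Q \<and> aff_dim Q = int (n + 1)
            \<and> (\<forall>F. F facet_of Q \<longrightarrow> regular_simplex F)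
            \<and> simplicial_iso (boundary_complex Q) (KP n ?P)"
    by (rule realize_generic[of V R "sqrt 2" n \<psi>, OF _ G(1) Rsing Rdist G(7) bij P corr])
       (auto simp: V_def)
  then show ?thesis by (simp add: A_def B_def)
qed


lemma face_equidistant:
  fixes Q :: "'a::euclidean_space set"
  assumes Q: "polytope Q" and reg: "\<forall>F. F facet_of Q \<longrightarrow> regular_simplex F"
    and W: "W \<in> boundary_complex Q"
  shows "\<exists>d. \<forall>x\<in>W. \<forall>y\<in>W. x \<noteq> y \<longrightarrow> dist x y = d"
proof -
  obtain F where F: "W = {v. v extreme_point_of F}" "F face_of Q" "F \<noteq> {}" "F \<noteq> Q"
    using W unfolding boundary_complex_def by auto
  obtain G where G: "G facet_of Q" "F \<subseteq> G"
    by (rule face_of_polyhedron_subset_facet[OF polytope_imp_polyhedron[OF Q] F(2) F(3) F(4)])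
  have "regular_simplex G" using reg G(1) by simp
  then obtain V d where V: "finite V" "\<not> affine_dependent V" "G = convex hull V"
      "\<forall>x\<in>V. \<forall>y\<in>V. x \<noteq> y \<longrightarrow> dist x y = d"
    unfolding regular_simplex_def by auto
  have FG: "F face_of G" using face_of_subset[OF F(2) G(2) facet_of_imp_subset[OF G(1)]] .
  have "W \<subseteq> V"
  proof
    fix v assume "v \<in> W"
    then have "v extreme_point_of F" using F(1) by simp
    then have "v extreme_point_of G" using extreme_point_of_face[OF FG] by simp
    then show "v \<in> V" using extreme_point_of_convex_hull_affine_independent[OF V(2)] V(3) by simp
  qed
  then show ?thesis using V(4) by (intro exI[of _ d]) auto
qed


lemma three_avoid:
  assumes "n \<ge> 2" "j \<in> {1..n+1::nat}" "k \<in> {1..n+1}"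
  shows "\<exists>p\<in>{1..n+1}. p \<noteq> j \<and> p \<noteq> k"
proof -
  have "{1,2,3} \<subseteq> {1..n+1}" using assms(1) by auto
  moreover have "\<exists>p\<in>{1,2,3::nat}. p \<noteq> j \<and> p \<noteq> k" by auto
  ultimately show ?thesis by blast
qed

lemma two_avoid:
  assumes "n \<ge> 2" "j \<in> {1..n+1::nat}"
  shows "\<exists>p\<in>{1..n+1}. \<exists>q\<in>{1..n+1}. p \<noteq> q \<and> p \<noteq> j \<and> q \<noteq> j"
proof -
  have "{1,2,3} \<subseteq> {1..n+1}" using assms(1) by auto
  moreover have "\<exists>p\<in>{1,2,3::nat}. \<exists>q\<in>{1,2,3::nat}. p \<noteq> q \<and> p \<noteq> j \<and> q \<noteq> j" by auto
  ultimately show ?thesis by blast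
qed

lemma only_if_dir:
  fixes Q :: "'a::euclidean_space set"
  assumes n2: "n \<ge> 2" and dimA: "DIM('a) = n + 1" and P: "partition_on {1..n+1} P"
    and Q: "polytope Q" and reg: "\<forall>F. F facet_of Q \<longrightarrow> regular_simplex F"
    and iso: "simplicial_iso (boundary_complex Q) (KP n P)"
  shows "card P = 1 \<or> (\<forall>B\<in>P. card B = 1) \<or> (\<exists>A B. P = {A, B} \<and> card A = 1 \<and> card B = n)"
proof (rule ccontr)
  assume neg: "\<not> (card P = 1 \<or> (\<forall>B\<in>P. card B = 1) \<or> (\<exists>A B. P = {A, B} \<and> card A = 1 \<and> card B = n))"
  let ?U = "{1..n+1}"
  let ?L = "Lab n P"
  let ?BC = "boundary_complex Q"
  from iso obtain f where f: "bij_betw f (\<Union>?BC) (\<Union>(KP n P))"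
    "\<And>S. S \<subseteq> \<Union>?BC \<Longrightarrow> (S \<in> ?BC \<longleftrightarrow> f ` S \<in> KP n P)"
    unfolding simplicial_iso_def by auto
  have KL: "T \<subseteq> ?L" if "T \<in> KP n P" for T using KP_char[OF P] that by simp
  have UK: "\<Union>(KP n P) = ?L"
  proof
    show "\<Union>(KP n P) \<subseteq> ?L" using KL by auto
    show "?L \<subseteq> \<Union>(KP n P)" using KP_single[OF P] by auto
  qed
  define g where "g = inv_into (\<Union>?BC) f"
  have gbij: "bij_betw g ?L (\<Union>?BC)" using bij_betw_inv_into[OF f(1)] UK unfolding g_def by simp
  have ginj: "inj_on g ?L" using gbij by (simp add: bij_betw_def)
  have fg: "f (g x) = x" if "x \<in> ?L" for x
  proof -
    have "x \<in> f ` (\<Union>?BC)" using f(1) UK that by (simp add: bij_betw_def)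
    then show ?thesis unfolding g_def by (rule f_inv_into_f)
  qed
  have gne: "g x \<noteq> g y" if "x \<in> ?L" "y \<in> ?L" "x \<noteq> y" for x y
    using inj_onD[OF ginj _ that(1,2)] that(3) by auto
  have E: "\<exists>d. \<forall>x\<in>K. \<forall>y\<in>K. x \<noteq> y \<longrightarrow> dist (g x) (g y) = d" if K: "K \<in> KP n P" for K
  proof -
    have KL': "K \<subseteq> ?L" using KL[OF K] .
    have sub: "g ` K \<subseteq> \<Union>?BC" using gbij KL' by (auto simp: bij_betw_def)
    have "f ` (g ` K) = K" using fg KL' by (force simp: image_image)
    then have "g ` K \<in> ?BC" using f(2)[OF sub] K by simp
    then have "\<exists>d. \<forall>x\<in>g ` K. \<forall>y\<in>g ` K. x \<noteq> y \<longrightarrow> dist x y = d" by (rule face_equidistant[OF Q reg])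
    then obtain d where d: "\<forall>x\<in>g ` K. \<forall>y\<in>g ` K. x \<noteq> y \<longrightarrow> dist x y = d" by auto
    have "\<forall>x\<in>K. \<forall>y\<in>K. x \<noteq> y \<longrightarrow> dist (g x) (g y) = d"
    proof (intro ballI impI)
      fix x y assume xyK: "x \<in> K" "y \<in> K" "x \<noteq> y"
      have "g x \<noteq> g y" using gne[of x y] KL' xyK by auto
      then show "dist (g x) (g y) = d" using d xyK by auto
    qed
    then show ?thesis by (rule exI)
  qed
  have U: "\<Union>P = ?U" using partition_onD1[OF P] by simp
  have Pne: "{} \<notin> P" using partition_onD3[OF P] .
  have BU: "B \<subseteq> ?U" if "B \<in> P" for B using U that by auto
  define K0 :: "(nat + nat set) set" where "K0 = Inl ` ?U"
  have K0: "K0 \<in> KP n P" unfolding KP_char[OF P] K0_def Lab_def by auto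
  define Kj :: "nat set \<Rightarrow> nat \<Rightarrow> (nat + nat set) set" where "Kj B j = insert (Inr B) (Inl ` (?U - {j}))" for B j
  have Kj: "Kj B j \<in> KP n P" if "B \<in> P" "j \<in> B" for B j
  proof -
    have "\<not> (Inr C \<in> Kj B j \<and> Inl ` C \<subseteq> Kj B j)" if "C \<in> P" for C
    proof
      assume a: "Inr C \<in> Kj B j \<and> Inl ` C \<subseteq> Kj B j"
      then have "C = B" unfolding Kj_def by auto
      then have "Inl j \<in> Kj B j" using a \<open>j \<in> B\<close> by auto
      then show False unfolding Kj_def by auto
    qed
    moreover have "Kj B j \<subseteq> ?L" unfolding Kj_def Lab_def using that by auto
    ultimately show ?thesis unfolding KP_char[OF P] Kj_def by auto
  qed
  define Kjk :: "nat set \<Rightarrow> nat \<Rightarrow> nat set \<Rightarrow> nat \<Rightarrow> (nat + nat set) set" where "Kjk B j C k = insert (Inr B) (insert (Inr C) (Inl ` (?U - {j, k})))" for B j C k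
  have Kjk: "Kjk B j C k \<in> KP n P" if "B \<in> P" "j \<in> B" "C \<in> P" "k \<in> C" for B j C k
  proof -
    have "\<not> (Inr D \<in> Kjk B j C k \<and> Inl ` D \<subseteq> Kjk B j C k)" if "D \<in> P" for D
    proof
      assume a: "Inr D \<in> Kjk B j C k \<and> Inl ` D \<subseteq> Kjk B j C k"
      then have "D = B \<or> D = C" unfolding Kjk_def by auto
      then have "Inl j \<in> Kjk B j C k \<or> Inl k \<in> Kjk B j C k" using a \<open>j \<in> B\<close> \<open>k \<in> C\<close> by auto
      then show False unfolding Kjk_def by auto
    qed
    moreover have "Kjk B j C k \<subseteq> ?L" unfolding Kjk_def Lab_def using that by auto
    ultimately show ?thesis unfolding KP_char[OF P] Kjk_def by auto
  qed
  obtain d0 where d0: "\<forall>x\<in>K0. \<forall>y\<in>K0. x \<noteq> y \<longrightarrow> dist (g x) (g y) = d0" using E[OF K0] by auto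
  have L1: "Inl 1 \<in> ?L" "Inl 2 \<in> ?L" using n2 unfolding Lab_def by auto
  have d0pos: "d0 > 0"
  proof -
    have "dist (g (Inl 1)) (g (Inl 2)) = d0" using d0 n2 unfolding K0_def by auto
    moreover have "g (Inl 1) \<noteq> g (Inl 2)" using gne[OF L1] by simp
    ultimately show ?thesis by auto
  qed
  have Kjd: "dist (g x) (g y) = d0" if H: "B \<in> P" "j \<in> B" "x \<in> Kj B j" "y \<in> Kj B j" "x \<noteq> y" for B j x y
  proof -
    obtain dK where dK: "\<forall>x\<in>Kj B j. \<forall>y\<in>Kj B j. x \<noteq> y \<longrightarrow> dist (g x) (g y) = dK"
      using E[OF Kj[OF H(1,2)]] by auto
    have jU: "j \<in> ?U" using subsetD[OF BU[OF H(1)] H(2)] .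
    obtain p q where pq: "p \<in> ?U" "q \<in> ?U" "p \<noteq> q" "p \<noteq> j" "q \<noteq> j" using two_avoid[OF n2 jU] by auto
    have "dist (g (Inl p)) (g (Inl q)) = dK" using dK pq unfolding Kj_def by auto
    moreover have "dist (g (Inl p)) (g (Inl q)) = d0" using d0 pq unfolding K0_def by auto
    ultimately have "dK = d0" by simp
    then show ?thesis using dK H by auto
  qed
  have Kjkd: "dist (g x) (g y) = d0" if H: "B \<in> P" "j \<in> B" "C \<in> P" "k \<in> C" "x \<in> Kjk B j C k" "y \<in> Kjk B j C k" "x \<noteq> y"
    for B j C k x y
  proof -
    obtain dK where dK: "\<forall>x\<in>Kjk B j C k. \<forall>y\<in>Kjk B j C k. x \<noteq> y \<longrightarrow> dist (g x) (g y) = dK"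
      using E[OF Kjk[OF H(1-4)]] by auto
    have jU: "j \<in> ?U" "k \<in> ?U" using subsetD[OF BU[OF H(1)] H(2)] subsetD[OF BU[OF H(3)] H(4)] by auto
    obtain p where p: "p \<in> ?U" "p \<noteq> j" "p \<noteq> k" using three_avoid[OF n2 jU] by auto
    have "dist (g (Inr B)) (g (Inl p)) = dK" using dK p unfolding Kjk_def by auto
    moreover have "dist (g (Inr B)) (g (Inl p)) = d0" using Kjd[OF H(1,2)] p unfolding Kj_def by auto
    ultimately have "dK = d0" by simp
    then show ?thesis using dK H by auto
  qed
  have adjIR: "dist (g (Inl i)) (g (Inr B)) = d0" if iB: "i \<in> ?U" "B \<in> P" "B \<noteq> {i}" for i B
  proof -
    have "B \<noteq> {}" using Pne iB(2) by auto
    then obtain j where j: "j \<in> B" "j \<noteq> i" using iB(3) by blast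
    show ?thesis by (rule Kjd[OF iB(2) j(1)]) (use iB j in \<open>auto simp: Kj_def\<close>)
  qed
  have adjRR: "dist (g (Inr B)) (g (Inr C)) = d0" if BC: "B \<in> P" "C \<in> P" "B \<noteq> C" for B C
  proof -
    obtain j where j: "j \<in> B" using Pne BC(1) by (metis all_not_in_conv)
    obtain k where k: "k \<in> C" using Pne BC(2) by (metis all_not_in_conv)
    show ?thesis by (rule Kjkd[OF BC(1) j BC(2) k]) (use BC in \<open>auto simp: Kjk_def\<close>)
  qed
  have adjII: "dist (g (Inl i)) (g (Inl i')) = d0" if "i \<in> ?U" "i' \<in> ?U" "i \<noteq> i'" for i i'
    using d0 that unfolding K0_def by auto
  have ADJ: "dist (g x) (g y) = d0" if xy: "x \<in> ?L" "y \<in> ?L" "x \<noteq> y"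
     and nx: "\<not> (\<exists>i. x = Inl i \<and> y = Inr {i})" and ny: "\<not> (\<exists>i. y = Inl i \<and> x = Inr {i})" for x y
  proof -
    consider (ll) i i' where "i \<in> ?U" "i' \<in> ?U" "x = Inl i" "y = Inl i'"
      | (lr) i B where "i \<in> ?U" "B \<in> P" "x = Inl i" "y = Inr B"
      | (rl) i B where "i \<in> ?U" "B \<in> P" "y = Inl i" "x = Inr B"
      | (rr) B C where "B \<in> P" "C \<in> P" "x = Inr B" "y = Inr C"
      using xy(1,2) unfolding Lab_def by blast
    then show ?thesis
    proof cases
      case ll then show ?thesis using adjII xy(3) by auto
    next
      case lr then show ?thesis using adjIR nx by auto
    next
      case rl then show ?thesis using adjIR[of i B] ny by (auto simp: dist_commute)
    next
      case rr then show ?thesis using adjRR xy(3) by auto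
    qed
  qed
  have cardg: "card (g ` X) = card X" if "X \<subseteq> ?L" for X
    using card_image[OF inj_on_subset[OF ginj that]] .
  have finL: "finite ?L" unfolding Lab_def using finite_elements[OF _ P] by simp
  have cardU: "card (Inl ` ?U :: (nat + nat set) set) = n + 1" by (simp add: card_image)
  have finU: "finite (Inl ` ?U :: (nat + nat set) set)" by simp
  have card2: "card B \<ge> 2" if BP: "B \<in> P" "card B \<noteq> 1" for B
  proof -
    have "finite B" using BU[OF BP(1)] finite_subset by auto
    moreover have "B \<noteq> {}" using Pne BP(1) by auto
    ultimately have "card B \<ge> 1" by (simp add: Suc_leI card_gt_0_iff)
    then show ?thesis using BP(2) by simp
  qed
  have ADJ': "dist (g x) (g y) = d0" if H: "x \<in> ?L" "y \<in> ?L" "x \<noteq> y" "\<And>i. {x, y} \<noteq> {Inl i, Inr {i}}" for x y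
  proof (rule ADJ[OF H(1-3)])
    show "\<not> (\<exists>i. x = Inl i \<and> y = Inr {i})" using H(4) by auto
    show "\<not> (\<exists>i. y = Inl i \<and> x = Inr {i})" using H(4) by (metis insert_commute)
  qed
  have imgd: "dist x y = d0" if H: "X \<subseteq> ?L" "x \<in> g ` X" "y \<in> g ` X" "x \<noteq> y"
     "\<And>x' y' i. x' \<in> X \<Longrightarrow> y' \<in> X \<Longrightarrow> x = g x' \<Longrightarrow> y = g y' \<Longrightarrow> {x', y'} \<noteq> {Inl i, Inr {i}}" for X x y
  proof -
    obtain x' y' where xy: "x' \<in> X" "y' \<in> X" "x = g x'" "y = g y'" using H(2,3) by auto
    have "x' \<noteq> y'" using xy H(4) by auto
    then show ?thesis using ADJ'[of x' y'] H(1,5) xy by auto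
  qed
  have notdep: "affine_dependent (g ` X)" if H: "X \<subseteq> ?L" "card X > n + 2" for X
  proof (rule ccontr)
    assume "\<not> affine_dependent (g ` X)"
    then have "card (g ` X) \<le> n + 2" using indep_card_le[of "g ` X"] dimA by simp
    then show False using cardg[OF H(1)] H(2) by simp
  qed
  have inrnot: "Inr X \<notin> Inl ` S" for X :: "nat set" and S :: "nat set" by auto
  have caseI: False if H: "B \<in> P" "C \<in> P" "B \<noteq> C" "card B \<ge> 2" "card C \<ge> 2" for B C
  proof -
    define X where "X = insert (Inr B) (insert (Inr C) (Inl ` ?U))"
    have XL: "X \<subseteq> ?L" unfolding X_def Lab_def using H by auto
    have cX: "card X = n + 3" unfolding X_def using H(3) cardU by (simp add: card_insert_if inrnot)
    have "\<not> affine_dependent (g ` X)"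
    proof (rule equidistant_indep)
      show "finite (g ` X)" unfolding X_def by simp
      fix x y assume "x \<in> g ` X" "y \<in> g ` X" "x \<noteq> y"
      then show "dist x y = d0"
      proof (rule imgd[OF XL])
        fix x' y' i assume "x' \<in> X" "y' \<in> X"
        then have "Inr {i} \<notin> {x', y'}" using H(4,5) unfolding X_def by auto
        then show "{x', y'} \<noteq> {Inl i, Inr {i}}" by auto
      qed
    qed
    then show False using notdep[OF XL] cX by simp
  qed
  have caseII: False if H: "B \<in> P" "card B \<ge> 2" "{a0} \<in> P" "{b0} \<in> P" "a0 \<noteq> b0" for B a0 b0
  proof -
    have a0U: "a0 \<in> ?U" "b0 \<in> ?U" using BU[OF H(3)] BU[OF H(4)] by auto
    have Ba: "B \<noteq> {a0}" "B \<noteq> {b0}" using H(2) by auto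
    have Bi: "B \<noteq> {i}" for i using H(2) by auto
    define L1 where "L1 = insert (Inr B) (Inl ` ?U)"
    define La where "La = insert (Inr {a0}) L1"
    define Lb where "Lb = insert (Inr {b0}) L1"
    define L2 where "L2 = insert (Inr {a0}) Lb"
    have subs: "L1 \<subseteq> ?L" "La \<subseteq> ?L" "Lb \<subseteq> ?L" "L2 \<subseteq> ?L"
      unfolding L1_def La_def Lb_def L2_def Lab_def using H by auto
    have fins: "finite L1" "finite La" "finite Lb" "finite L2" unfolding L1_def La_def Lb_def L2_def by auto
    have cL1: "card L1 = n + 2" unfolding L1_def using cardU by (simp add: card_insert_if inrnot)
    have cLa: "card La = n + 3" unfolding La_def using cL1 Ba fins by (simp add: card_insert_if L1_def inrnot)
    have cLb: "card Lb = n + 3" unfolding Lb_def using cL1 Ba fins by (simp add: card_insert_if L1_def inrnot)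
    have cL2: "card L2 = n + 4" unfolding L2_def using cLb Ba fins H(5) by (simp add: card_insert_if Lb_def L1_def inrnot)
    have inrL2: "i = a0 \<or> i = b0" if "Inr {i} \<in> L2" for i
      using that Bi[of i] unfolding L2_def Lb_def L1_def by auto
    have inrLa: "i = a0" if "Inr {i} \<in> La" for i
      using that Bi[of i] unfolding La_def L1_def by auto
    have inrLb: "i = b0" if "Inr {i} \<in> Lb" for i
      using that Bi[of i] unfolding Lb_def L1_def by auto
    define ua where "ua = g (Inl a0)"
    define qa where "qa = g (Inr {a0})"
    define ub where "ub = g (Inl b0)"
    define qb where "qb = g (Inr {b0})"
    have labs: "Inl a0 \<in> ?L" "Inr {a0} \<in> ?L" "Inl b0 \<in> ?L" "Inr {b0} \<in> ?L"
      using a0U H unfolding Lab_def by auto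
    have dist4: "distinct [ua, qa, ub, qb]"
      using gne[OF labs(1) labs(2)] gne[OF labs(1) labs(3)] gne[OF labs(1) labs(4)]
        gne[OF labs(2) labs(3)] gne[OF labs(2) labs(4)] gne[OF labs(3) labs(4)] H(5)
      unfolding ua_def qa_def ub_def qb_def by auto
    have Da: "(dist ua qa)^2 * (real (card (g ` La)) - 2) = 2 * d0^2 * (real (card (g ` La)) - 1)"
    proof (rule one_extra)
      show "finite (g ` La)" using fins by simp
      show "ua \<in> g ` La" "qa \<in> g ` La" unfolding ua_def qa_def La_def L1_def using a0U by auto
      show "ua \<noteq> qa" using dist4 by simp
      show "d0 > 0" by (rule d0pos)
      show "affine_dependent (g ` La)" using notdep[OF subs(2)] cLa by simp
      fix x y assume xy: "x \<in> g ` La" "y \<in> g ` La" "x \<noteq> y" "{x, y} \<noteq> {ua, qa}"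
      show "dist x y = d0"
      proof (rule imgd[OF subs(2) xy(1-3)])
        fix x' y' i assume "x' \<in> La" "y' \<in> La" "x = g x'" "y = g y'"
        then show "{x', y'} \<noteq> {Inl i, Inr {i}}" using inrLa[of i] xy(4) unfolding ua_def qa_def
          by (auto simp: doubleton_eq_iff)
      qed
    qed
    have Db: "(dist ub qb)^2 * (real (card (g ` Lb)) - 2) = 2 * d0^2 * (real (card (g ` Lb)) - 1)"
    proof (rule one_extra)
      show "finite (g ` Lb)" using fins by simp
      show "ub \<in> g ` Lb" "qb \<in> g ` Lb" unfolding ub_def qb_def Lb_def L1_def using a0U by auto
      show "ub \<noteq> qb" using dist4 by simp
      show "d0 > 0" by (rule d0pos)
      show "affine_dependent (g ` Lb)" using notdep[OF subs(3)] cLb by simp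
      fix x y assume xy: "x \<in> g ` Lb" "y \<in> g ` Lb" "x \<noteq> y" "{x, y} \<noteq> {ub, qb}"
      show "dist x y = d0"
      proof (rule imgd[OF subs(3) xy(1-3)])
        fix x' y' i assume "x' \<in> Lb" "y' \<in> Lb" "x = g x'" "y = g y'"
        then show "{x', y'} \<noteq> {Inl i, Inr {i}}" using inrLb[of i] xy(4) unfolding ub_def qb_def
          by (auto simp: doubleton_eq_iff)
      qed
    qed
    have cga: "card (g ` La) = n + 3" using cardg[OF subs(2)] cLa by simp
    have cgb: "card (g ` Lb) = n + 3" using cardg[OF subs(3)] cLb by simp
    have cg2: "card (g ` L2) = n + 4" using cardg[OF subs(4)] cL2 by simp
    have "\<not> affine_dependent (g ` L2)"
    proof (rule two_extra)
      show "finite (g ` L2)" using fins by simp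
      show "ua \<in> g ` L2" "qa \<in> g ` L2" "ub \<in> g ` L2" "qb \<in> g ` L2"
        unfolding ua_def qa_def ub_def qb_def L2_def Lb_def L1_def using a0U by auto
      show "distinct [ua, qa, ub, qb]" by (rule dist4)
      show "d0 > 0" by (rule d0pos)
      show "(dist ua qa)^2 * (real (card (g ` L2)) - 3) = 2 * d0^2 * (real (card (g ` L2)) - 2)"
        using Da cga cg2 by simp
      show "(dist ub qb)^2 * (real (card (g ` L2)) - 3) = 2 * d0^2 * (real (card (g ` L2)) - 2)"
        using Db cgb cg2 by simp
      fix x y assume xy: "x \<in> g ` L2" "y \<in> g ` L2" "x \<noteq> y" "{x, y} \<noteq> {ua, qa}" "{x, y} \<noteq> {ub, qb}"
      show "dist x y = d0"
      proof (rule imgd[OF subs(4) xy(1-3)])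
        fix x' y' i assume "x' \<in> L2" "y' \<in> L2" "x = g x'" "y = g y'"
        then show "{x', y'} \<noteq> {Inl i, Inr {i}}" using inrL2[of i] xy(4,5) unfolding ua_def qa_def ub_def qb_def
          by (auto simp: doubleton_eq_iff)
      qed
    qed
    then show False using notdep[OF subs(4)] cL2 by simp
  qed
  have finP: "finite P" using finite_elements[OF _ P] by simp
  obtain B1 where B1: "B1 \<in> P" "card B1 \<noteq> 1" using neg by auto
  have cB1: "card B1 \<ge> 2" using card2[OF B1] .
  obtain C where C: "C \<in> P" "C \<noteq> B1"
  proof -
    have "P \<noteq> {B1}" using neg by auto
    then show ?thesis using that B1(1) by blast
  qed
  show False
  proof (cases "card C = 1")
    case False
    then show False using caseI[OF B1(1) C(1) C(2)[symmetric] cB1 card2[OF C(1) False]] by simp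
  next
    case True
    then obtain a0 where a0: "C = {a0}" by (auto simp: card_1_singleton_iff)
    show False
    proof (cases "P = {B1, C}")
      case True
      have a0U: "a0 \<in> ?U" using BU[OF C(1)] a0 by auto
      have "B1 \<inter> C = {}" using partition_onD2[OF P] B1(1) C unfolding disjoint_def by auto
      moreover have "B1 \<union> C = ?U" using U True by auto
      ultimately have "B1 = ?U - {a0}" using a0 by auto
      then have "card B1 = n" using a0U by simp
      then show False using neg True \<open>card C = 1\<close> by auto
    next
      case False
      then obtain D where D: "D \<in> P" "D \<noteq> B1" "D \<noteq> C" using B1(1) C(1) by auto
      show False
      proof (cases "card D = 1")
        case False
        then show False using caseI[OF B1(1) D(1) D(2)[symmetric] cB1 card2[OF D(1) False]] by simp
      next
        case True
        then obtain b0 where b0: "D = {b0}" by (auto simp: card_1_singleton_iff)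
        have "a0 \<noteq> b0" using a0 b0 D(3) by auto
        then show False using caseII[OF B1(1) cB1 _ _] C(1) D(1) a0 b0 by auto
      qed
    qed
  qed
qed


theorem proposition2p10:
  fixes n :: nat and P :: "nat set set"
  assumes "n \<ge> 2" and "DIM('a::euclidean_space) = n + 1"
    and "partition_on {1..n+1} P"
  shows "(\<exists>Q :: 'a set. polytope Q \<and> aff_dim Q = int (n + 1)
            \<and> (\<forall>F. F facet_of Q \<longrightarrow> regular_simplex F)
            \<and> simplicial_iso (boundary_complex Q) (KP n P))
         \<longleftrightarrow> (card P = 1
              \<or> (\<forall>B\<in>P. card B = 1)
              \<or> (\<exists>A B. P = {A, B} \<and> card A = 1 \<and> card B = n))"
proof
  assume "\<exists>Q :: 'a set. polytope Q \<and> aff_dim Q = int (n + 1)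
            \<and> (\<forall>F. F facet_of Q \<longrightarrow> regular_simplex F)
            \<and> simplicial_iso (boundary_complex Q) (KP n P)"
  then obtain Q :: "'a set" where Q: "polytope Q" "\<forall>F. F facet_of Q \<longrightarrow> regular_simplex F"
      "simplicial_iso (boundary_complex Q) (KP n P)" by auto
  show "card P = 1 \<or> (\<forall>B\<in>P. card B = 1) \<or> (\<exists>A B. P = {A, B} \<and> card A = 1 \<and> card B = n)"
    by (rule only_if_dir[OF assms(1) assms(2) assms(3) Q])
next
  assume R: "card P = 1 \<or> (\<forall>B\<in>P. card B = 1) \<or> (\<exists>A B. P = {A, B} \<and> card A = 1 \<and> card B = n)"
  let ?U = "{1..n+1}"
  have U: "\<Union>P = ?U" using partition_onD1[OF assms(3)] by simp
  have Pne: "{} \<notin> P" using partition_onD3[OF assms(3)] .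
  consider "card P = 1" | "\<forall>B\<in>P. card B = 1" | "\<exists>A B. P = {A, B} \<and> card A = 1 \<and> card B = n"
    using R by blast
  then show "\<exists>Q :: 'a set. polytope Q \<and> aff_dim Q = int (n + 1)
            \<and> (\<forall>F. F facet_of Q \<longrightarrow> regular_simplex F)
            \<and> simplicial_iso (boundary_complex Q) (KP n P)"
  proof cases
    case 1
    then obtain X where "P = {X}" by (auto simp: card_1_singleton_iff)
    then have "P = {?U}" using U by simp
    then show ?thesis using case_simplex[OF assms(2)] by simp
  next
    case 2
    have "P = (\<lambda>i. {i}) ` ?U"
    proof
      show "P \<subseteq> (\<lambda>i. {i}) ` ?U"
      proof
        fix B assume B: "B \<in> P"
        then obtain x where "B = {x}" using 2 by (auto simp: card_1_singleton_iff)
        moreover have "x \<in> ?U" using U B \<open>B = {x}\<close> by auto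
        ultimately show "B \<in> (\<lambda>i. {i}) ` ?U" by auto
      qed
      show "(\<lambda>i. {i}) ` ?U \<subseteq> P"
      proof
        fix B assume "B \<in> (\<lambda>i. {i}) ` ?U"
        then obtain i where i: "i \<in> ?U" "B = {i}" by auto
        then obtain C where C: "C \<in> P" "i \<in> C" using U by blast
        then obtain x where "C = {x}" using 2 by (auto simp: card_1_singleton_iff)
        then show "B \<in> P" using C i by auto
      qed
    qed
    then show ?thesis using case_cross[OF assms(2)] by simp
  next
    case 3
    then obtain A B where AB: "P = {A, B}" "card A = 1" "card B = n" by blast
    then obtain a where a: "A = {a}" by (auto simp: card_1_singleton_iff)
    have aU: "a \<in> ?U" using U AB(1) a by auto
    have ABne: "A \<noteq> B" using AB assms(1) by auto
    have "A \<inter> B = {}" using partition_onD2[OF assms(3)] AB(1) ABne unfolding disjoint_def by auto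
    moreover have "A \<union> B = ?U" using U AB(1) by auto
    ultimately have "B = ?U - {a}" using a by auto
    then have "P = {{a}, ?U - {a}}" using AB(1) a by simp
    moreover have "n \<ge> 1" using assms(1) by simp
    ultimately show ?thesis using case_bipyr[OF assms(2) _ aU] by simp
  qed
qed

end
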